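(* Let $m$ be an odd positive integer, and consider integer representations by the quadratic form $x^2+y^2+2z^2+2w^2$. (i) The number of $(x,y,z,w)\in\mathbb{Z}^4$ with $x^2+y^2+2z^2+2w^2=4m$, $x,y$ even and $z,w$ odd, is $4\sigma(m)$. (ii) The number of $(x,y,z,w)\in\mathbb{Z}^4$ with $x^2+y^2+2z^2+2w^2=8m$, $x,y$ even and $z,w$ odd, is $16\sigma(m)$. (iii) The number of $(x,y,z,w)\in\mathbb{Z}^4$ with $x^2+y^2+2z^2+2w^2=4m$, $x,y$ odd and $z,w$ of different parity, is $16\sigma(m)$.
   Context: $\sigma(m)$ denotes the sum of the positive divisors of $m$. *)

theory Defs
  imports Main
begin

definition sigma :: "nat \<Rightarrow> nat" where
  "sigma m = (\<Sum>d\<in>{d. d dvd m}. d)"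

end

theory Submission
  imports Defs Complex_Main "HOL-Computational_Algebra.Primes"
begin

datatype quat = Q (re: rat) (qi: rat) (qj: rat) (qk: rat)

lemma quat_eqI: "re x = re y \<Longrightarrow> qi x = qi y \<Longrightarrow> qj x = qj y \<Longrightarrow> qk x = qk y \<Longrightarrow> x = y"
  by (cases x; cases y) auto

instantiation quat :: ring_1
begin
definition "0 = Q 0 0 0 0"
definition "1 = Q 1 0 0 0"
definition "x + y = Q (re x + re y) (qi x + qi y) (qj x + qj y) (qk x + qk y)"
definition "x - y = Q (re x - re y) (qi x - qi y) (qj x - qj y) (qk x - qk y)"
definition "- x = Q (- re x) (- qi x) (- qj x) (- qk x)"
definition "x * y = Q (re x * re y - qi x * qi y - qj x * qj y - qk x * qk y)
                     (re x * qi y + qi x * re y + qj x * qk y - qk x * qj y)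
                     (re x * qj y - qi x * qk y + qj x * re y + qk x * qi y)
                     (re x * qk y + qi x * qj y - qj x * qi y + qk x * re y)"
instance
  by standard (auto intro!: quat_eqI simp: zero_quat_def one_quat_def plus_quat_def minus_quat_def
      uminus_quat_def times_quat_def algebra_simps)
end

lemma quat_simps[simp]:
  "re 0 = 0" "qi 0 = 0" "qj 0 = 0" "qk 0 = 0"
  "re 1 = 1" "qi 1 = 0" "qj 1 = 0" "qk 1 = 0"
  "re (x+y) = re x + re y" "qi (x+y) = qi x + qi y" "qj (x+y) = qj x + qj y" "qk (x+y) = qk x + qk y"
  "re (x-y) = re x - re y" "qi (x-y) = qi x - qi y" "qj (x-y) = qj x - qj y" "qk (x-y) = qk x - qk y"
  "re (-x) = - re x" "qi (-x) = - qi x" "qj (-x) = - qj x" "qk (-x) = - qk x"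
  "re (x*y) = re x * re y - qi x * qi y - qj x * qj y - qk x * qk y"
  "qi (x*y) = re x * qi y + qi x * re y + qj x * qk y - qk x * qj y"
  "qj (x*y) = re x * qj y - qi x * qk y + qj x * re y + qk x * qi y"
  "qk (x*y) = re x * qk y + qi x * qj y - qj x * qi y + qk x * re y"
  by (simp_all add: zero_quat_def one_quat_def plus_quat_def minus_quat_def
      uminus_quat_def times_quat_def)

lemma of_nat_quat: "(of_nat n :: quat) = Q (of_nat n) 0 0 0"
  by (induction n) (auto intro!: quat_eqI)
lemma of_int_quat: "(of_int n :: quat) = Q (of_int n) 0 0 0"
  by (cases n) (auto intro!: quat_eqI simp: of_nat_quat)

definition sc :: "rat \<Rightarrow> quat" where "sc r = Q r 0 0 0"
definition qcnj :: "quat \<Rightarrow> quat" where "qcnj x = Q (re x) (- qi x) (- qj x) (- qk x)"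
definition nrm :: "quat \<Rightarrow> rat" where "nrm x = (re x)^2 + (qi x)^2 + (qj x)^2 + (qk x)^2"

lemma sc_simps[simp]: "re (sc r) = r" "qi (sc r) = 0" "qj (sc r) = 0" "qk (sc r) = 0"
  by (auto simp: sc_def)
lemma qcnj_simps[simp]: "re (qcnj x) = re x" "qi (qcnj x) = - qi x" "qj (qcnj x) = - qj x" "qk (qcnj x) = - qk x"
  by (auto simp: qcnj_def)

lemma sc_comm: "sc r * x = x * sc r" by (rule quat_eqI) (auto simp: algebra_simps)
lemma sc_mult: "sc r * x = Q (r * re x) (r * qi x) (r * qj x) (r * qk x)" by (rule quat_eqI) auto
lemma sc_mult_sc: "sc r * sc s = sc (r * s)" by (rule quat_eqI) auto
lemma sc_add: "sc (r + s) = sc r + sc s" by (rule quat_eqI) auto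
lemma sc_1: "sc 1 = 1" by (rule quat_eqI) auto
lemma sc_0: "sc 0 = 0" by (rule quat_eqI) auto
lemma of_int_sc: "of_int n = sc (of_int n)" by (simp add: of_int_quat sc_def)
lemma of_nat_sc: "of_nat n = sc (of_nat n)" by (simp add: of_nat_quat sc_def)

lemma mult_cnj: "x * qcnj x = sc (nrm x)" by (rule quat_eqI) (auto simp: nrm_def power2_eq_square algebra_simps)
lemma qcnj_mult_self: "qcnj x * x = sc (nrm x)" by (rule quat_eqI) (auto simp: nrm_def power2_eq_square algebra_simps)
lemma qcnj_mult: "qcnj (x * y) = qcnj y * qcnj x" by (rule quat_eqI) (auto simp: algebra_simps)
lemma qcnj_cnj[simp]: "qcnj (qcnj x) = x" by (rule quat_eqI) auto
lemma qcnj_add: "qcnj (x + y) = qcnj x + qcnj y" by (rule quat_eqI) auto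
lemma qcnj_diff: "qcnj (x - y) = qcnj x - qcnj y" by (rule quat_eqI) auto
lemma qcnj_sc[simp]: "qcnj (sc r) = sc r" by (rule quat_eqI) auto
lemma qcnj_1[simp]: "qcnj 1 = 1" by (rule quat_eqI) auto
lemma qcnj_0[simp]: "qcnj 0 = 0" by (rule quat_eqI) auto
lemma nrm_mult: "nrm (x * y) = nrm x * nrm y"
  by (simp add: nrm_def power2_eq_square algebra_simps)
lemma nrm_cnj[simp]: "nrm (qcnj x) = nrm x" by (simp add: nrm_def)
lemma nrm_nonneg: "nrm x \<ge> 0" by (simp add: nrm_def)
lemma nrm_eq_0: "nrm x = 0 \<longleftrightarrow> x = 0"
proof
  assume "nrm x = 0"
  then have "(re x)^2 = 0 \<and> (qi x)^2 = 0 \<and> (qj x)^2 = 0 \<and> (qk x)^2 = 0"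
    unfolding nrm_def using zero_le_power2[of "re x"] zero_le_power2[of "qi x"] zero_le_power2[of "qj x"] zero_le_power2[of "qk x"] by linarith
  then have "re x = 0 \<and> qi x = 0 \<and> qj x = 0 \<and> qk x = 0" by simp
  then show "x = 0" by (auto intro: quat_eqI)
qed (simp add: nrm_def)
lemma nrm_sc: "nrm (sc r) = r^2" by (simp add: nrm_def)
lemma nrm_1[simp]: "nrm 1 = 1" by (simp add: nrm_def)

lemma sc_inj: "sc r = sc s \<longleftrightarrow> r = s" by (metis sc_simps(1))

lemma mult_right_cancel_q:
  fixes x y z :: quat
  assumes "z \<noteq> 0" "x * z = y * z" shows "x = y"
proof -
  have "x * z * qcnj z = y * z * qcnj z" using assms by simp
  then have "x * sc (nrm z) = y * sc (nrm z)" by (simp add: mult.assoc mult_cnj)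
  then have "sc (nrm z) * x = sc (nrm z) * y" by (simp add: sc_comm)
  then have "sc (1 / nrm z) * (sc (nrm z) * x) = sc (1/ nrm z) * (sc (nrm z) * y)" by simp
  moreover have "nrm z \<noteq> 0" using assms nrm_eq_0 by auto
  ultimately show ?thesis by (simp add: mult.assoc[symmetric] sc_mult_sc sc_1)
qed

lemma mult_left_cancel_q:
  fixes x y z :: quat
  assumes "z \<noteq> 0" "z * x = z * y" shows "x = y"
proof -
  have "qcnj x * qcnj z = qcnj y * qcnj z" using assms by (metis qcnj_mult)
  moreover have "qcnj z \<noteq> 0" using assms by (metis qcnj_cnj qcnj_0)
  ultimately have "qcnj x = qcnj y" using mult_right_cancel_q by blast
  then show ?thesis by (metis qcnj_cnj)
qed


definition lp :: "quat \<Rightarrow> bool" where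
  "lp q \<longleftrightarrow> re q \<in> \<int> \<and> qi q \<in> \<int> \<and> qj q \<in> \<int> \<and> qk q \<in> \<int>"
definition om :: quat where "om = Q (1/2) (1/2) (1/2) (1/2)"
definition hw :: "quat \<Rightarrow> bool" where "hw q \<longleftrightarrow> lp q \<or> lp (q - om)"

lemma om_simps[simp]: "re om = 1/2" "qi om = 1/2" "qj om = 1/2" "qk om = 1/2"
  by (auto simp: om_def)

lemma lp_add: "lp x \<Longrightarrow> lp y \<Longrightarrow> lp (x + y)" by (auto simp: lp_def)
lemma lp_diff: "lp x \<Longrightarrow> lp y \<Longrightarrow> lp (x - y)" by (auto simp: lp_def)
lemma lp_uminus: "lp x \<Longrightarrow> lp (- x)" by (auto simp: lp_def)
lemma lp_mult: "lp x \<Longrightarrow> lp y \<Longrightarrow> lp (x * y)" by (auto simp: lp_def)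
lemma lp_0[simp]: "lp 0" and lp_1[simp]: "lp 1" by (auto simp: lp_def)
lemma lp_cnj: "lp x \<Longrightarrow> lp (qcnj x)" by (auto simp: lp_def)
lemma lp_2om: "lp (om + om)" by (auto simp: lp_def)
lemma lp_hw: "lp x \<Longrightarrow> hw x" by (simp add: hw_def)
lemma lp_of_int: "lp (of_int n)" by (simp add: lp_def of_int_quat)
lemma lp_sc_int: "r \<in> \<int> \<Longrightarrow> lp (sc r)" by (simp add: lp_def)

lemma half_int_lemma:
  fixes s :: int and x :: rat
  assumes "x = of_int s / 2"
  shows "(even s \<longrightarrow> x \<in> \<int>) \<and> (odd s \<longrightarrow> x - 1/2 \<in> \<int>)"
proof (intro conjI impI)
  assume "even s" then obtain k where "s = 2*k" by blast
  then show "x \<in> \<int>" using assms by simp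
next
  assume "odd s" then obtain k where "s = 2*k+1" by (metis oddE)
  then have "x - 1/2 = of_int k" using assms by (simp add: field_simps)
  then show "x - 1/2 \<in> \<int>" by simp
qed

lemma lp_mult_om: assumes "lp l" shows "hw (l * om)" "hw (om * l)"
proof -
  obtain a b c d where l: "re l = of_int a" "qi l = of_int b" "qj l = of_int c" "qk l = of_int d"
    using assms unfolding lp_def by (auto elim!: Ints_cases)
  have e1: "re (l*om) = of_int (a - b - c - d) / 2" "qi (l*om) = of_int (a + b + c - d) / 2"
       "qj (l*om) = of_int (a - b + c + d) / 2" "qk (l*om) = of_int (a + b - c + d) / 2"
    by (simp_all add: l field_simps)
  have e2: "re (om*l) = of_int (a - b - c - d) / 2" "qi (om*l) = of_int (a + b - c + d) / 2"
       "qj (om*l) = of_int (a + b + c - d) / 2" "qk (om*l) = of_int (a - b + c + d) / 2"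
    by (simp_all add: l field_simps)
  have gen: "hw z" if e: "re z = of_int s1 / 2" "qi z = of_int s2 / 2" "qj z = of_int s3 / 2" "qk z = of_int s4 / 2"
     and par: "even (s1 - s2)" "even (s1 - s3)" "even (s1 - s4)" for z s1 s2 s3 s4
  proof (cases "even s1")
    case True
    then have "even s2" "even s3" "even s4" using par by presburger+
    then show ?thesis unfolding hw_def lp_def
      using half_int_lemma[OF e(1)] half_int_lemma[OF e(2)] half_int_lemma[OF e(3)] half_int_lemma[OF e(4)] True
      by blast
  next
    case False
    then have "odd s2" "odd s3" "odd s4" using par by presburger+
    then have "re z - 1/2 \<in> \<int>" "qi z - 1/2 \<in> \<int>" "qj z - 1/2 \<in> \<int>" "qk z - 1/2 \<in> \<int>"
      using half_int_lemma[OF e(1)] half_int_lemma[OF e(2)] half_int_lemma[OF e(3)] half_int_lemma[OF e(4)] False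
      by blast+
    then have "lp (z - om)" unfolding lp_def by simp
    then show ?thesis unfolding hw_def by blast
  qed
  show "hw (l * om)" by (rule gen[OF e1]) presburger+
  show "hw (om * l)" by (rule gen[OF e2]) presburger+
qed

lemma hw_add: "hw x \<Longrightarrow> hw y \<Longrightarrow> hw (x + y)"
proof -
  assume hx: "hw x" and hy: "hw y"
  { assume "lp (x - om)" "lp (y - om)"
    then have "lp ((x - om) + (y - om) + (om + om))" using lp_add lp_2om by blast
    then have "lp (x + y)" by (simp add: algebra_simps) }
  moreover
  { assume "lp x" "lp (y - om)" then have "lp (x + y - om)" using lp_add by (metis add_diff_eq) }
  moreover
  { assume "lp (x - om)" "lp y" then have "lp (x + y - om)" using lp_add by (metis add_diff_eq add.commute) }
  ultimately show ?thesis using hx hy lp_add unfolding hw_def by blast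
qed

lemma hw_uminus: "hw x \<Longrightarrow> hw (- x)"
proof -
  assume hx: "hw x"
  { assume "lp (x - om)"
    then have "lp (- (x - om) - (om + om))" using lp_uminus lp_diff lp_2om by blast
    moreover have "- (x - om) - (om + om) = - x - om" by (simp add: algebra_simps)
    ultimately have "lp (- x - om)" by simp }
  then show ?thesis using hx lp_uminus unfolding hw_def by blast
qed

lemma hw_diff: "hw x \<Longrightarrow> hw y \<Longrightarrow> hw (x - y)"
  using hw_add[of x "- y"] hw_uminus by simp

lemma hw_0[simp]: "hw 0" and hw_1[simp]: "hw 1" by (auto simp: hw_def)
lemma hw_om: "hw om" by (simp add: hw_def)

lemma hw_decomp: "hw x \<Longrightarrow> \<exists>l. lp l \<and> (x = l \<or> x = l + om)"
  unfolding hw_def by (metis diff_add_cancel)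

lemma om_om: "om * om = om - 1" by (rule quat_eqI) auto

lemma hw_mult: assumes "hw x" "hw y" shows "hw (x * y)"
proof -
  obtain l1 where l1: "lp l1" "x = l1 \<or> x = l1 + om" using hw_decomp assms(1) by blast
  obtain l2 where l2: "lp l2" "y = l2 \<or> y = l2 + om" using hw_decomp assms(2) by blast
  have a: "hw (l1 * l2)" using l1 l2 lp_mult lp_hw by blast
  have b: "hw (l1 * om)" "hw (om * l2)" using lp_mult_om l1 l2 by auto
  have c: "hw (om * om)" by (simp add: om_om hw_diff hw_om)
  from l1(2) l2(2) show ?thesis
    by (auto simp: algebra_simps intro!: hw_add a b c)
qed

lemma hw_cnj: "hw x \<Longrightarrow> hw (qcnj x)"
proof -
  assume "hw x"
  then obtain l where l: "lp l" "x = l \<or> x = l + om" using hw_decomp by blast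
  have "qcnj om = om - Q 0 1 1 1" by (rule quat_eqI) auto
  moreover have "lp (Q 0 1 1 1)" by (simp add: lp_def)
  ultimately have "hw (qcnj om)" by (simp add: hw_diff hw_om lp_hw)
  then show ?thesis using l by (metis qcnj_add hw_add lp_hw lp_cnj)
qed

lemma hw_of_int: "hw (of_int n)" by (simp add: lp_hw lp_of_int)

lemma nrm_lp_Ints: "lp x \<Longrightarrow> nrm x \<in> \<int>" by (auto simp: lp_def nrm_def)

lemma nrm_hw_Ints: assumes "hw x" shows "nrm x \<in> \<int>"
proof -
  obtain l where l: "lp l" "x = l \<or> x = l + om" using hw_decomp assms by blast
  obtain a b c d where ab: "re l = of_int a" "qi l = of_int b" "qj l = of_int c" "qk l = of_int d"
    using l(1) unfolding lp_def by (auto elim!: Ints_cases)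
  have "nrm (l + om) = of_int (a^2 + b^2 + c^2 + d^2 + a + b + c + d + 1)"
    by (simp add: nrm_def ab power2_eq_square field_simps)
  then show ?thesis using l nrm_lp_Ints by auto
qed

definition inrm :: "quat \<Rightarrow> int" where "inrm x = \<lfloor>nrm x\<rfloor>"
lemma inrm: "hw x \<Longrightarrow> of_int (inrm x) = nrm x"
  using nrm_hw_Ints unfolding inrm_def by (metis floor_of_int Ints_cases)
lemma inrm_nonneg: "inrm x \<ge> 0" unfolding inrm_def using nrm_nonneg by simp
lemma inrm_mult: "hw x \<Longrightarrow> hw y \<Longrightarrow> inrm (x * y) = inrm x * inrm y"
  by (metis hw_mult inrm nrm_mult of_int_eq_iff of_int_mult)
lemma inrm_0_iff: "hw x \<Longrightarrow> inrm x = 0 \<longleftrightarrow> x = 0"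
  by (metis inrm nrm_eq_0 of_int_0 of_int_eq_iff)


definition qinv :: "quat \<Rightarrow> quat" where "qinv b = sc (1 / nrm b) * qcnj b"

lemma qinv_right: "b \<noteq> 0 \<Longrightarrow> qinv b * b = 1"
  unfolding qinv_def using nrm_eq_0[of b]
  by (simp add: mult.assoc qcnj_mult_self sc_mult_sc sc_1)
lemma qinv_left: "b \<noteq> 0 \<Longrightarrow> b * qinv b = 1"
proof -
  assume "b \<noteq> 0"
  then have "nrm b \<noteq> 0" using nrm_eq_0 by auto
  have "b * qinv b = sc (1 / nrm b) * (b * qcnj b)" unfolding qinv_def
    by (metis mult.assoc sc_comm)
  then show ?thesis using \<open>nrm b \<noteq> 0\<close> by (simp add: mult_cnj sc_mult_sc sc_1)
qed

lemma hh: "y = 1/2 \<or> y = -1/2 \<Longrightarrow> y - 1/2 \<in> (\<int>::rat set)"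
proof -
  assume "y = 1/2 \<or> y = -1/2"
  then have "y - 1/2 = 0 \<or> y - 1/2 = -1" by auto
  then show ?thesis by (metis Ints_0 Ints_1 Ints_minus)
qed

lemma round_near:
  fixes x :: quat
  shows "\<exists>q. hw q \<and> nrm (x - q) < 1"
proof -
  define L where "L = Q (of_int (round (re x))) (of_int (round (qi x))) (of_int (round (qj x))) (of_int (round (qk x)))"
  have lpL: "lp L" by (simp add: L_def lp_def)
  define d where "d = x - L"
  have d1: "\<bar>re d\<bar> \<le> 1/2" "\<bar>qi d\<bar> \<le> 1/2" "\<bar>qj d\<bar> \<le> 1/2" "\<bar>qk d\<bar> \<le> 1/2"
    using of_int_round_abs_le[of "re x"] of_int_round_abs_le[of "qi x"] of_int_round_abs_le[of "qj x"]
      of_int_round_abs_le[of "qk x"] by (simp_all add: d_def L_def abs_minus_commute)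
  have sq: "y^2 \<le> 1/4" if "\<bar>y\<bar> \<le> 1/2" for y :: rat
  proof -
    have "y^2 = \<bar>y\<bar>^2" by simp
    also have "\<dots> \<le> (1/2)^2" by (rule power_mono) (use that in auto)
    finally show ?thesis by (simp add: power2_eq_square)
  qed
  have sqe: "y = 1/2 \<or> y = -1/2" if "\<bar>y\<bar> \<le> 1/2" "y^2 \<ge> 1/4" for y :: rat
  proof -
    have "\<bar>y\<bar>^2 \<ge> (1/2)^2" using that by (simp add: power2_eq_square)
    then have "\<bar>y\<bar> \<ge> 1/2" by (rule power2_le_imp_le) simp
    then show ?thesis using that by linarith
  qed
  show ?thesis
  proof (cases "nrm d < 1")
    case True
    then show ?thesis using lpL lp_hw d_def by blast
  next
    case False
    then have n1: "(re d)^2 + (qi d)^2 + (qj d)^2 + (qk d)^2 \<ge> 1" by (simp add: nrm_def)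
    have s: "(re d)^2 \<le> 1/4" "(qi d)^2 \<le> 1/4" "(qj d)^2 \<le> 1/4" "(qk d)^2 \<le> 1/4" using sq d1 by auto
    have "(re d)^2 \<ge> 1/4" "(qi d)^2 \<ge> 1/4" "(qj d)^2 \<ge> 1/4" "(qk d)^2 \<ge> 1/4" using n1 s by linarith+
    then have h: "re d = 1/2 \<or> re d = -1/2" "qi d = 1/2 \<or> qi d = -1/2" "qj d = 1/2 \<or> qj d = -1/2" "qk d = 1/2 \<or> qk d = -1/2"
      using sqe[of "re d"] sqe[of "qi d"] sqe[of "qj d"] sqe[of "qk d"] d1 by blast+
    have "re d - 1/2 \<in> \<int>" "qi d - 1/2 \<in> \<int>" "qj d - 1/2 \<in> \<int>" "qk d - 1/2 \<in> \<int>"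
      using h hh by blast+
    then have "lp (d - om)" by (simp add: lp_def)
    then have "hw d" by (simp add: hw_def)
    moreover have "x = d + L" by (simp add: d_def)
    ultimately have "hw x" using lpL lp_hw hw_add by simp
    then show ?thesis by (intro exI[of _ x]) (simp add: nrm_def)
  qed
qed

lemma euclid:
  assumes "hw a" "hw b" "b \<noteq> 0"
  shows "\<exists>q. hw q \<and> nrm (a - q * b) < nrm b"
proof -
  obtain q where q: "hw q" "nrm (a * qinv b - q) < 1" using round_near by blast
  have "a - q * b = (a * qinv b - q) * b" using qinv_right[OF assms(3)]
    by (simp add: algebra_simps mult.assoc)
  then have "nrm (a - q * b) = nrm (a * qinv b - q) * nrm b" by (simp add: nrm_mult)
  also have "\<dots> < 1 * nrm b" using q(2) assms(3) nrm_eq_0[of b] nrm_nonneg[of b]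
    by (intro mult_strict_right_mono) auto
  finally show ?thesis using q(1) by auto
qed

definition rdvd :: "quat \<Rightarrow> quat \<Rightarrow> bool" where "rdvd g a \<longleftrightarrow> (\<exists>s. hw s \<and> a = s * g)"

lemma rgcd:
  assumes "hw a" "hw b"
  shows "\<exists>g u v. hw g \<and> rdvd g a \<and> rdvd g b \<and> hw u \<and> hw v \<and> g = u * a + v * b"
proof (cases "a = 0 \<and> b = 0")
  case True
  then show ?thesis by (intro exI[of _ 0] exI[of _ 0] exI[of _ 0]) (auto simp: rdvd_def intro: hw_0)
next
  case False
  define J where "J = {h. h \<noteq> 0 \<and> (\<exists>u v. hw u \<and> hw v \<and> h = u * a + v * b)}"
  have "J \<noteq> {}"
  proof -
    have "a \<noteq> 0 \<Longrightarrow> a \<in> J" unfolding J_def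
      by simp (metis hw_0 hw_1 mult_1 mult_zero_left add_0_right)
    moreover have "b \<noteq> 0 \<Longrightarrow> b \<in> J" unfolding J_def
      by simp (metis hw_0 hw_1 mult_1 mult_zero_left add_0)
    ultimately have "a \<in> J \<or> b \<in> J" using False by blast
    then show ?thesis by blast
  qed
  define P where "P n \<longleftrightarrow> (\<exists>h\<in>J. inrm h = int n)" for n
  obtain h0 where "h0 \<in> J" using \<open>J \<noteq> {}\<close> by blast
  then have "P (nat (inrm h0))" unfolding P_def using inrm_nonneg[of h0] by auto
  then have "\<exists>n. P n" by blast
  then obtain n where n: "P n" "\<And>m. m < n \<Longrightarrow> \<not> P m" using exists_least_iff[of P] by blast
  then obtain g u v where g: "g \<noteq> 0" "hw u" "hw v" "g = u * a + v * b" "inrm g = int n"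
    unfolding P_def J_def by blast
  have hwg: "hw g" using g assms by (simp add: hw_add hw_mult)
  have dv: "rdvd g c" if c: "c = u' * a + v' * b" "hw u'" "hw v'" for c u' v'
  proof -
    have hc: "hw c" using c assms by (simp add: hw_add hw_mult)
    obtain q where q: "hw q" "nrm (c - q * g) < nrm g" using euclid[OF hc hwg g(1)] by blast
    have r: "c - q * g = (u' - q * u) * a + (v' - q * v) * b" using c g(4)
      by (simp add: algebra_simps)
    have hr: "hw (c - q * g)" using hc hwg q(1) by (simp add: hw_diff hw_mult)
    have "c - q * g = 0"
    proof (rule ccontr)
      assume ne: "c - q * g \<noteq> 0"
      have "hw (u' - q * u)" "hw (v' - q * v)" using c q(1) g(2,3) by (simp_all add: hw_diff hw_mult)
      then have "c - q * g \<in> J" unfolding J_def using ne r by blast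
      moreover have "(of_int (inrm (c - q * g)) :: rat) < of_int (inrm g)"
        using q(2) inrm[OF hr] inrm[OF hwg] by simp
      then have "inrm (c - q * g) < int n" using g(5) by linarith
      ultimately have "P (nat (inrm (c - q * g)))" "nat (inrm (c - q * g)) < n"
        unfolding P_def using inrm_nonneg[of "c - q * g"] by auto
      then show False using n(2) by blast
    qed
    then show ?thesis unfolding rdvd_def using q(1) by (intro exI[of _ q]) simp
  qed
  have "rdvd g a" using dv[of a 1 0] by simp
  moreover have "rdvd g b" using dv[of b 0 1] by simp
  ultimately show ?thesis using hwg g by blast
qed


definition unitq :: "quat \<Rightarrow> bool" where "unitq u \<longleftrightarrow> hw u \<and> nrm u = 1"
definition A :: "nat \<Rightarrow> quat set" where "A n = {q. hw q \<and> nrm q = of_nat n}"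
definition pdvd :: "nat \<Rightarrow> quat \<Rightarrow> bool" where "pdvd p r \<longleftrightarrow> (\<exists>s. hw s \<and> r = of_nat p * s)"

lemma of_nat_comm: "of_nat p * x = x * (of_nat p :: quat)"
  by (simp add: of_nat_sc sc_comm)
lemma qcnj_of_nat[simp]: "qcnj (of_nat p) = of_nat p" by (simp add: of_nat_sc)
lemma nrm_of_nat: "nrm (of_nat p) = of_nat p ^ 2" by (simp add: of_nat_sc nrm_sc)
lemma hw_of_nat: "hw (of_nat n)" using hw_of_int[of "int n"] by simp

lemma pdvd_cnj: "pdvd p (qcnj r) \<Longrightarrow> pdvd p r"
  unfolding pdvd_def by (metis qcnj_cnj qcnj_mult qcnj_of_nat of_nat_comm hw_cnj)

lemma unit_inv: "unitq u \<Longrightarrow> qcnj u * u = 1" "unitq u \<Longrightarrow> u * qcnj u = 1"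
  unfolding unitq_def by (simp_all add: qcnj_mult_self mult_cnj sc_1)

lemma inrm_of_nat: "inrm (of_nat p) = int p ^ 2"
  using inrm[OF hw_of_nat[of p]] nrm_of_nat[of p] by (metis of_int_eq_iff of_int_of_nat_eq of_int_power)

lemma int_nat_sq_dvd:
  assumes "prime p" "a \<ge> 0" "b \<ge> 0" "a * b = int p ^ k"
  shows "\<exists>i\<le>k. a = int p ^ i"
proof -
  have "nat a dvd p ^ k" using assms
    by (metis dvd_triv_left nat_int nat_mult_distrib nat_power_eq of_nat_0_le_iff)
  then obtain i where "i \<le> k" "nat a = p ^ i" using divides_primepow_nat[OF assms(1)] by blast
  moreover have "a = int (nat a)" using assms(2) by simp
  ultimately show ?thesis by (intro exI[of _ i]) (simp add: of_nat_power)
qed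

lemma inrm_unit: "hw u \<Longrightarrow> inrm u = 1 \<Longrightarrow> unitq u"
  unfolding unitq_def using inrm[of u] by (metis of_int_1)

lemma exist_div:
  assumes p: "prime p" and r: "hw r" "int p dvd inrm r" "\<not> pdvd p r"
  shows "\<exists>\<pi>. \<pi> \<in> A p \<and> rdvd \<pi> r"
proof -
  obtain g u v where g: "hw g" "rdvd g r" "rdvd g (of_nat p)" "hw u" "hw v" "g = u * r + v * of_nat p"
    using rgcd[OF r(1) hw_of_nat[of p]] by blast
  obtain h where h: "hw h" "of_nat p = h * g" using g(3) unfolding rdvd_def by blast
  have "inrm h * inrm g = int p ^ 2" using inrm_mult[OF h(1) g(1)] h(2) inrm_of_nat by metis
  then obtain i where i: "i \<le> 2" "inrm g = int p ^ i"
    using int_nat_sq_dvd[OF p inrm_nonneg inrm_nonneg] by (metis mult.commute)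
  have p1: "int p > 1" using p prime_gt_1_nat by auto
  have "i \<noteq> 0"
  proof
    assume "i = 0"
    then have ug: "unitq g" using i inrm_unit g(1) by simp
    have one: "1 = (qcnj g * u) * r + (qcnj g * v) * of_nat p"
      using unit_inv(1)[OF ug] g(6) by (simp add: algebra_simps mult.assoc)
    obtain k where k: "inrm r = int p * k" using r(2) by blast
    have "qcnj r = 1 * qcnj r" by simp
    also have "\<dots> = (qcnj g * u) * (r * qcnj r) + (qcnj g * v) * of_nat p * qcnj r"
      by (subst one) (simp add: algebra_simps mult.assoc)
    also have "r * qcnj r = of_nat p * of_int k" using mult_cnj[of r] inrm[OF r(1)] k
      by (simp add: of_int_sc of_nat_sc sc_mult_sc)
    finally have "qcnj r = of_nat p * ((qcnj g * u) * of_int k + (qcnj g * v) * qcnj r)"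
      by (simp add: algebra_simps mult.assoc of_nat_comm)
    moreover have "hw ((qcnj g * u) * of_int k + (qcnj g * v) * qcnj r)"
      using g r by (simp add: hw_add hw_mult hw_cnj hw_of_int)
    ultimately have "pdvd p (qcnj r)" unfolding pdvd_def by blast
    then show False using pdvd_cnj r(3) by blast
  qed
  moreover have "i \<noteq> 2"
  proof
    assume "i = 2"
    then have "inrm h = 1" using \<open>inrm h * inrm g = int p ^ 2\<close> i p1 by simp
    then have uh: "unitq h" using inrm_unit h(1) by simp
    have "g = qcnj h * of_nat p" using h(2) unit_inv(1)[OF uh] by (simp add: mult.assoc[symmetric])
    obtain s where s: "hw s" "r = s * g" using g(2) unfolding rdvd_def by blast
    have "r = of_nat p * (s * qcnj h)" using s \<open>g = qcnj h * of_nat p\<close>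
      by (simp add: mult.assoc of_nat_comm)
    then have "pdvd p r" unfolding pdvd_def using s(1) h(1) by (metis hw_mult hw_cnj)
    then show False using r(3) by blast
  qed
  ultimately have "i = 1" using i by auto
  then have "nrm g = of_nat p" using inrm[OF g(1)] i by simp
  then show ?thesis using g unfolding A_def by blast
qed

lemma uniq_div:
  assumes p: "prime p" and r: "hw r" "\<not> pdvd p r"
    and pi: "\<pi>1 \<in> A p" "\<pi>2 \<in> A p" "rdvd \<pi>1 r" "rdvd \<pi>2 r"
  shows "\<exists>u. unitq u \<and> \<pi>2 = u * \<pi>1"
proof -
  have h1: "hw \<pi>1" "nrm \<pi>1 = of_nat p" and h2: "hw \<pi>2" "nrm \<pi>2 = of_nat p" using pi unfolding A_def by auto
  have i1: "inrm \<pi>1 = int p" and i2: "inrm \<pi>2 = int p" using inrm h1 h2 by (metis of_int_eq_iff of_int_of_nat_eq)+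
  obtain g x y where g: "hw g" "rdvd g \<pi>1" "rdvd g \<pi>2" "hw x" "hw y" "g = x * \<pi>1 + y * \<pi>2"
    using rgcd[OF h1(1) h2(1)] by blast
  obtain a1 where a1: "hw a1" "\<pi>1 = a1 * g" using g(2) unfolding rdvd_def by blast
  obtain a2 where a2: "hw a2" "\<pi>2 = a2 * g" using g(3) unfolding rdvd_def by blast
  have e1: "inrm a1 * inrm g = int p ^ 1" using inrm_mult[OF a1(1) g(1)] a1(2) i1 by simp
  have e2: "inrm a2 * inrm g = int p ^ 1" using inrm_mult[OF a2(1) g(1)] a2(2) i2 by simp
  obtain i where i: "i \<le> 1" "inrm g = int p ^ i"
    using int_nat_sq_dvd[OF p inrm_nonneg inrm_nonneg] e1 by (metis mult.commute)
  have p1: "int p > 1" using p prime_gt_1_nat by auto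
  show ?thesis
  proof (cases "i = 1")
    case True
    then have "inrm a1 = 1" "inrm a2 = 1" using e1 e2 i p1 by auto
    then have u1: "unitq a1" and u2: "unitq a2" using inrm_unit a1 a2 by auto
    have "g = qcnj a1 * \<pi>1" using a1(2) unit_inv(1)[OF u1] by (simp add: mult.assoc[symmetric])
    then have "\<pi>2 = (a2 * qcnj a1) * \<pi>1" using a2(2) by (simp add: mult.assoc)
    moreover have "unitq (a2 * qcnj a1)" using u1 u2 unfolding unitq_def
      by (simp add: hw_mult hw_cnj nrm_mult)
    ultimately show ?thesis by blast
  next
    case False
    then have "i = 0" using i by auto
    then have ug: "unitq g" using i inrm_unit g(1) by simp
    have one: "1 = (qcnj g * x) * \<pi>1 + (qcnj g * y) * \<pi>2"
      using unit_inv(1)[OF ug] g(6) by (simp add: algebra_simps mult.assoc)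
    have one': "1 = qcnj \<pi>1 * qcnj (qcnj g * x) + qcnj \<pi>2 * qcnj (qcnj g * y)"
      using arg_cong[OF one, of qcnj] by (simp add: qcnj_add qcnj_mult)
    obtain s1 where s1: "hw s1" "r = s1 * \<pi>1" using pi(3) unfolding rdvd_def by blast
    obtain s2 where s2: "hw s2" "r = s2 * \<pi>2" using pi(4) unfolding rdvd_def by blast
    have c1: "\<pi>1 * qcnj \<pi>1 = of_nat p" using mult_cnj[of \<pi>1] h1 by (simp add: of_nat_sc)
    have c2: "\<pi>2 * qcnj \<pi>2 = of_nat p" using mult_cnj[of \<pi>2] h2 by (simp add: of_nat_sc)
    have "r = r * 1" by simp
    also have "\<dots> = r * qcnj \<pi>1 * qcnj (qcnj g * x) + r * qcnj \<pi>2 * qcnj (qcnj g * y)"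
      by (subst one') (simp add: algebra_simps mult.assoc)
    also have "r * qcnj \<pi>1 = s1 * of_nat p" using s1(2) c1 by (simp add: mult.assoc)
    also have "r * qcnj \<pi>2 = s2 * of_nat p" using s2(2) c2 by (simp add: mult.assoc)
    finally have "r = of_nat p * (s1 * qcnj (qcnj g * x) + s2 * qcnj (qcnj g * y))"
      by (simp add: algebra_simps of_nat_comm mult.assoc)
    moreover have "hw (s1 * qcnj (qcnj g * x) + s2 * qcnj (qcnj g * y))"
      using s1 s2 g by (simp add: hw_add hw_mult hw_cnj)
    ultimately have "pdvd p r" unfolding pdvd_def by blast
    then show ?thesis using r(2) by blast
  qed
qed


lemma card_fibers:
  assumes "finite S" "f ` S \<subseteq> T" "finite T"
  shows "card S = (\<Sum>t\<in>T. card {s\<in>S. f s = t})"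
proof -
  have "S = (\<Union>t\<in>T. {s\<in>S. f s = t})" using assms(2) by auto
  then have "card S = card (\<Union>t\<in>T. {s\<in>S. f s = t})" by simp
  also have "\<dots> = (\<Sum>t\<in>T. card {s\<in>S. f s = t})"
    by (rule card_UN_disjoint) (use assms in auto)
  finally show ?thesis .
qed

lemma sq_le_bound: fixes x :: rat assumes "x^2 \<le> of_nat n" shows "\<bar>x\<bar> \<le> of_nat n"
proof (rule ccontr)
  assume "\<not> ?thesis"
  then have a: "\<bar>x\<bar> > of_nat n" by simp
  show False
  proof (cases "n = 0")
    case True then show False using assms a by simp
  next
    case False
    then have "(of_nat n::rat) \<ge> 1" by simp
    then have "\<bar>x\<bar> > 1" using a by linarith
    then have "\<bar>x\<bar> * \<bar>x\<bar> > \<bar>x\<bar> * 1" by (intro mult_strict_left_mono) auto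
    then have "x^2 > \<bar>x\<bar>" by (simp add: power2_eq_square)
    then show False using a assms by linarith
  qed
qed

lemma i2: "(x::rat) \<in> \<int> \<Longrightarrow> 2 * x + 1 \<in> \<int>"
  by (elim Ints_cases) (metis Ints_of_int of_int_1 of_int_add of_int_mult of_int_numeral)

lemma hw_twice: "hw q \<Longrightarrow> 2 * re q \<in> \<int> \<and> 2 * qi q \<in> \<int> \<and> 2 * qj q \<in> \<int> \<and> 2 * qk q \<in> \<int>"
proof -
  assume "hw q"
  then consider "lp q" | "lp (q - om)" unfolding hw_def by blast
  then show ?thesis
  proof cases
    case 1 then show ?thesis by (auto simp: lp_def)
  next
    case 2
    then have "re q - 1/2 \<in> \<int>" "qi q - 1/2 \<in> \<int>" "qj q - 1/2 \<in> \<int>" "qk q - 1/2 \<in> \<int>" by (auto simp: lp_def)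
    then have "2 * (re q - 1/2) + 1 \<in> \<int>" "2 * (qi q - 1/2) + 1 \<in> \<int>" "2 * (qj q - 1/2) + 1 \<in> \<int>" "2 * (qk q - 1/2) + 1 \<in> \<int>"
      using i2 by blast+
    then show ?thesis by (simp add: algebra_simps)
  qed
qed

lemma finite_A: "finite (A n)"
proof -
  define f where "f = (\<lambda>(a::int,b::int,c::int,d::int). Q (of_int a / 2) (of_int b / 2) (of_int c / 2) (of_int d / 2))"
  define B where "B = {-2 * int n..2 * int n}"
  have "A n \<subseteq> f ` (B \<times> B \<times> B \<times> B)"
  proof
    fix q assume q: "q \<in> A n"
    then have hq: "hw q" and nq: "nrm q = of_nat n" unfolding A_def by auto
    have b: "\<bar>y\<bar> \<le> of_nat n" if "y^2 \<le> nrm q" for y using sq_le_bound that nq by simp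
    have "(re q)^2 \<le> nrm q" "(qi q)^2 \<le> nrm q" "(qj q)^2 \<le> nrm q" "(qk q)^2 \<le> nrm q"
      unfolding nrm_def by (simp_all add: add_nonneg_nonneg)
    then have bd: "\<bar>re q\<bar> \<le> of_nat n" "\<bar>qi q\<bar> \<le> of_nat n" "\<bar>qj q\<bar> \<le> of_nat n" "\<bar>qk q\<bar> \<le> of_nat n"
      using b by auto
    obtain a b c d where abcd: "2 * re q = of_int a" "2 * qi q = of_int b" "2 * qj q = of_int c" "2 * qk q = of_int d"
      using hw_twice[OF hq] by (auto elim!: Ints_cases)
    have inB: "k \<in> B" if "of_int k = 2 * y" "\<bar>y\<bar> \<le> of_nat n" for k and y :: rat
    proof -
      have "\<bar>(of_int k :: rat)\<bar> \<le> 2 * of_nat n" using that by simp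
      then have "(of_int \<bar>k\<bar> :: rat) \<le> of_int (2 * int n)" by simp
      then have "\<bar>k\<bar> \<le> 2 * int n" by (simp only: of_int_le_iff)
      then show ?thesis unfolding B_def by auto
    qed
    have "q = f (a, b, c, d)" unfolding f_def using abcd by (auto intro!: quat_eqI)
    moreover have "a \<in> B" "b \<in> B" "c \<in> B" "d \<in> B"
      using inB[of a "re q"] inB[of b "qi q"] inB[of c "qj q"] inB[of d "qk q"] abcd bd by auto
    then have "(a, b, c, d) \<in> B \<times> B \<times> B \<times> B" by blast
    ultimately show "q \<in> f ` (B \<times> B \<times> B \<times> B)" by blast
  qed
  moreover have "finite (f ` (B \<times> B \<times> B \<times> B))" unfolding B_def by simp
  ultimately show ?thesis by (rule finite_subset)
qed

lemma A1_unit: "u \<in> A 1 \<longleftrightarrow> unitq u" unfolding A_def unitq_def by simp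

lemma A_mult: "a \<in> A m \<Longrightarrow> b \<in> A n \<Longrightarrow> a * b \<in> A (m * n)"
  unfolding A_def by (auto simp: hw_mult nrm_mult)

lemma A_nz: "a \<in> A m \<Longrightarrow> m > 0 \<Longrightarrow> a \<noteq> 0"
  unfolding A_def by (auto simp: nrm_def)

lemma of_nat_quat_nz: "p > 0 \<Longrightarrow> (of_nat p :: quat) \<noteq> 0"
proof
  assume "p > 0" "(of_nat p :: quat) = 0"
  then have "re (of_nat p :: quat) = re 0" by simp
  then show False using \<open>p > 0\<close> by (simp add: of_nat_quat)
qed

lemma divset_notp:
  assumes p: "prime p" and r: "hw r" "int p dvd inrm r" "\<not> pdvd p r"
  shows "card {\<pi> \<in> A p. rdvd \<pi> r} = card (A 1)"
proof -
  obtain \<pi>0 where pi0: "\<pi>0 \<in> A p" "rdvd \<pi>0 r" using exist_div[OF assms] by blast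
  have p0: "p > 0" using p prime_gt_0_nat by blast
  have nz: "\<pi>0 \<noteq> 0" using A_nz[OF pi0(1) p0] .
  have "{\<pi> \<in> A p. rdvd \<pi> r} = (\<lambda>u. u * \<pi>0) ` A 1"
  proof (intro equalityI subsetI)
    fix \<pi> assume "\<pi> \<in> {\<pi> \<in> A p. rdvd \<pi> r}"
    then obtain u where "unitq u" "\<pi> = u * \<pi>0" using uniq_div[OF p r(1) r(3) pi0(1) _ pi0(2)] by blast
    then show "\<pi> \<in> (\<lambda>u. u * \<pi>0) ` A 1" using A1_unit by blast
  next
    fix \<pi> assume "\<pi> \<in> (\<lambda>u. u * \<pi>0) ` A 1"
    then obtain u where u: "u \<in> A 1" "\<pi> = u * \<pi>0" by blast
    have "\<pi> \<in> A p" using A_mult[OF u(1) pi0(1)] u(2) by simp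
    moreover obtain s where s: "hw s" "r = s * \<pi>0" using pi0(2) unfolding rdvd_def by blast
    have uu: "unitq u" using u(1) A1_unit by blast
    have "r = (s * qcnj u) * \<pi>" using s(2) u(2) unit_inv(1)[OF uu] by (simp add: mult.assoc[symmetric]) (simp add: mult.assoc)
    then have "rdvd \<pi> r" unfolding rdvd_def using s(1) uu unfolding unitq_def by (metis hw_mult hw_cnj)
    ultimately show "\<pi> \<in> {\<pi> \<in> A p. rdvd \<pi> r}" by blast
  qed
  moreover have "inj_on (\<lambda>u. u * \<pi>0) (A 1)" using mult_right_cancel_q[OF nz] by (auto intro: inj_onI)
  ultimately show ?thesis by (simp add: card_image)
qed

lemma divset_p:
  assumes "pdvd p r"
  shows "{\<pi> \<in> A p. rdvd \<pi> r} = A p"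
proof -
  obtain s where s: "hw s" "r = of_nat p * s" using assms unfolding pdvd_def by blast
  have "rdvd \<pi> r" if "\<pi> \<in> A p" for \<pi>
  proof -
    have "qcnj \<pi> * \<pi> = of_nat p" using that qcnj_mult_self[of \<pi>] unfolding A_def by (simp add: of_nat_sc)
    then have "r = (s * qcnj \<pi>) * \<pi>" using s(2) by (simp add: mult.assoc of_nat_comm)
    then show ?thesis unfolding rdvd_def using s(1) that unfolding A_def by (metis (mono_tags) mem_Collect_eq hw_mult hw_cnj)
  qed
  then show ?thesis by blast
qed

lemma A_pdvd_card:
  assumes p: "prime p"
  shows "card {r \<in> A (p * m). pdvd p r} = (if p dvd m then card (A (m div p)) else 0)"
proof -
  have p0: "p > 0" using p prime_gt_0_nat by blast
  have key: "s \<in> A k \<longleftrightarrow> of_nat p * s \<in> A (p * m)" if "p * k = m" "hw s" for s k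
  proof -
    have "nrm (of_nat p * s) = of_nat p ^ 2 * nrm s" by (simp add: nrm_mult nrm_of_nat)
    moreover have "hw (of_nat p * s)" using that hw_of_nat hw_mult by blast
    moreover have "(of_nat p ^ 2 * nrm s = of_nat (p * m)) \<longleftrightarrow> nrm s = of_nat k"
      using that p0 by (auto simp: power2_eq_square)
    ultimately show ?thesis unfolding A_def using that by auto
  qed
  show ?thesis
  proof (cases "p dvd m")
    case True
    then obtain k where k: "m = p * k" by blast
    have "{r \<in> A (p * m). pdvd p r} = (\<lambda>s. of_nat p * s) ` A k"
    proof (intro equalityI subsetI)
      fix r assume "r \<in> {r \<in> A (p * m). pdvd p r}"
      then obtain s where "hw s" "r = of_nat p * s" "r \<in> A (p*m)" unfolding pdvd_def by blast
      then show "r \<in> (\<lambda>s. of_nat p * s) ` A k" using key[of k s] k by auto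
    next
      fix r assume "r \<in> (\<lambda>s. of_nat p * s) ` A k"
      then obtain s where "s \<in> A k" "r = of_nat p * s" by blast
      then show "r \<in> {r \<in> A (p * m). pdvd p r}" using key[of k s] k unfolding pdvd_def A_def by auto
    qed
    moreover have "inj_on (\<lambda>s. of_nat p * s) (A k)"
      using mult_left_cancel_q[OF of_nat_quat_nz[OF p0]] by (auto intro!: inj_onI)
    ultimately show ?thesis using True k p0 by (simp add: card_image)
  next
    case False
    have "{r \<in> A (p * m). pdvd p r} = {}"
    proof (rule ccontr)
      assume "{r \<in> A (p * m). pdvd p r} \<noteq> {}"
      then obtain r s where "r \<in> A (p*m)" "hw s" "r = of_nat p * s" unfolding pdvd_def by blast
      then have "of_nat p ^ 2 * nrm s = of_nat (p * m)" unfolding A_def by (simp add: nrm_mult nrm_of_nat)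
      then have "of_int (int p * inrm s) = (of_int (int m) :: rat)"
        using inrm[OF \<open>hw s\<close>] p0 by (simp add: power2_eq_square)
      then have "int m = int p * inrm s" by linarith
      then have "int p dvd int m" by simp
      then show False using False by simp
    qed
    then show ?thesis using False by (metis card.empty)
  qed
qed


lemma hecke_count:
  assumes p: "prime p"
  shows "card (A p) * card (A m) =
    card (A 1) * card {r \<in> A (p * m). \<not> pdvd p r} + card (A p) * card {r \<in> A (p * m). pdvd p r}"
proof -
  have p0: "p > 0" using p prime_gt_0_nat by blast
  define S where "S = A p \<times> A m"
  define f where "f = (\<lambda>x::quat \<times> quat. snd x * fst x)"
  have fS: "f ` S \<subseteq> A (p * m)" unfolding S_def f_def using A_mult by (auto simp: mult.commute)
  have finS: "finite S" unfolding S_def using finite_A by simp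
  have cS: "card S = (\<Sum>r\<in>A (p * m). card {x\<in>S. f x = r})"
    by (rule card_fibers[OF finS fS finite_A])
  have fib: "card {x\<in>S. f x = r} = card {\<pi> \<in> A p. rdvd \<pi> r}" if r: "r \<in> A (p * m)" for r
  proof -
    have "fst ` {x\<in>S. f x = r} = {\<pi> \<in> A p. rdvd \<pi> r}"
    proof (intro equalityI subsetI)
      fix \<pi> assume "\<pi> \<in> fst ` {x\<in>S. f x = r}"
      then obtain s where "(\<pi>, s) \<in> S" "s * \<pi> = r" unfolding f_def by force
      then show "\<pi> \<in> {\<pi> \<in> A p. rdvd \<pi> r}" unfolding S_def rdvd_def A_def by auto
    next
      fix \<pi> assume pi: "\<pi> \<in> {\<pi> \<in> A p. rdvd \<pi> r}"
      then obtain s where s: "hw s" "r = s * \<pi>" unfolding rdvd_def by blast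
      have "nrm r = nrm s * nrm \<pi>" using s by (simp add: nrm_mult)
      then have "of_nat (p * m) = nrm s * of_nat p" using pi r unfolding A_def by auto
      then have "nrm s = of_nat m" using p0 by (simp add: mult.commute)
      then have "(\<pi>, s) \<in> {x\<in>S. f x = r}" using s pi unfolding S_def f_def A_def by auto
      then show "\<pi> \<in> fst ` {x\<in>S. f x = r}" by force
    qed
    moreover have "inj_on fst {x\<in>S. f x = r}"
    proof (rule inj_onI)
      fix x y assume "x \<in> {x\<in>S. f x = r}" "y \<in> {x\<in>S. f x = r}" "fst x = fst y"
      then have "snd x * fst x = snd y * fst x" "fst x \<in> A p" unfolding f_def S_def by auto
      then have "snd x = snd y" using mult_right_cancel_q A_nz p0 by blast
      then show "x = y" using \<open>fst x = fst y\<close> by (simp add: prod_eq_iff)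
    qed
    ultimately show ?thesis by (metis card_image)
  qed
  have val: "card {\<pi> \<in> A p. rdvd \<pi> r} = (if pdvd p r then card (A p) else card (A 1))"
    if r: "r \<in> A (p * m)" for r
  proof (cases "pdvd p r")
    case True then show ?thesis using divset_p by simp
  next
    case False
    have hr: "hw r" using r unfolding A_def by auto
    have "of_int (inrm r) = (of_int (int p * int m) :: rat)" using inrm[OF hr] r unfolding A_def by simp
    then have "inrm r = int p * int m" by linarith
    then have "int p dvd inrm r" by simp
    then show ?thesis using divset_notp[OF p hr _ False] False by simp
  qed
  have "card S = (\<Sum>r\<in>A (p * m). if pdvd p r then card (A p) else card (A 1))"
    using cS fib val by simp
  also have "\<dots> = (\<Sum>r\<in>{r \<in> A (p * m). pdvd p r}. card (A p)) + (\<Sum>r\<in>{r \<in> A (p * m). \<not> pdvd p r}. card (A 1))"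
    by (simp add: sum.If_cases[OF finite_A] Int_def Diff_eq[symmetric] set_diff_eq)
  also have "\<dots> = card (A 1) * card {r \<in> A (p * m). \<not> pdvd p r} + card (A p) * card {r \<in> A (p * m). pdvd p r}"
    by simp
  finally show ?thesis unfolding S_def by (simp add: card_cartesian_product)
qed

lemma hecke_rec:
  assumes p: "prime p" and cp: "card (A p) = card (A 1) * (p + 1)" and c1: "card (A 1) > 0"
  shows "card (A (p * m)) + p * (if p dvd m then card (A (m div p)) else 0) = (p + 1) * card (A m)"
proof -
  define D where "D = card {r \<in> A (p * m). pdvd p r}"
  define E where "E = card {r \<in> A (p * m). \<not> pdvd p r}"
  have fX: "finite {r \<in> A (p * m). pdvd p r}" and fY: "finite {r \<in> A (p * m). \<not> pdvd p r}"
    using finite_A by simp_all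
  have dj: "{r \<in> A (p * m). pdvd p r} \<inter> {r \<in> A (p * m). \<not> pdvd p r} = {}" by blast
  have un: "{r \<in> A (p * m). pdvd p r} \<union> {r \<in> A (p * m). \<not> pdvd p r} = A (p * m)" by blast
  have DE: "card (A (p * m)) = D + E" unfolding D_def E_def
    using card_Un_disjoint[OF fX fY dj] un by simp
  have "card (A 1) * (p + 1) * card (A m) = card (A 1) * E + card (A 1) * (p + 1) * D"
    using hecke_count[OF p, of m] cp unfolding D_def E_def by simp
  then have "card (A 1) * ((p + 1) * card (A m)) = card (A 1) * (E + (p + 1) * D)"
    by (simp add: algebra_simps)
  then have "(p + 1) * card (A m) = E + (p + 1) * D" using c1 by simp
  moreover have "D = (if p dvd m then card (A (m div p)) else 0)" unfolding D_def by (rule A_pdvd_card[OF p])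
  ultimately show ?thesis using DE by (simp add: algebra_simps)
qed

lemma divisors_pm:
  fixes p m :: nat
  assumes p: "prime p" and m: "m > 0"
  shows "{d. d dvd p * m} = {d. d dvd m} \<union> (\<lambda>d. p * d) ` {d. d dvd m}"
proof (intro equalityI subsetI)
  fix d assume "d \<in> {d. d dvd p * m}"
  then have d: "d dvd p * m" by simp
  show "d \<in> {d. d dvd m} \<union> (\<lambda>d. p * d) ` {d. d dvd m}"
  proof (cases "p dvd d")
    case True
    then obtain e where "d = p * e" by blast
    then have "e dvd m" using d p prime_gt_0_nat by auto
    then show ?thesis using \<open>d = p * e\<close> by blast
  next
    case False
    then have "coprime p d" by (rule prime_imp_coprime[OF p])
    then have "coprime d p" by (simp add: coprime_commute)
    then have "d dvd m" using d coprime_dvd_mult_right_iff by blast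
    then show ?thesis by blast
  qed
qed auto

lemma sigma_rec:
  assumes p: "prime p" and m: "m > 0"
  shows "sigma (p * m) + p * (if p dvd m then sigma (m div p) else 0) = (p + 1) * sigma m"
proof -
  have p0: "p > 0" using p prime_gt_0_nat by blast
  define X where "X = {d. d dvd m}"
  define Y where "Y = (\<lambda>d. p * d) ` X"
  have fin: "finite X" using m by (simp add: X_def)
  have finY: "finite Y" using fin by (simp add: Y_def)
  have inj: "inj_on (\<lambda>d. p * d) Z" for Z using p0 by (auto intro: inj_onI)
  have s1: "(\<Sum>d\<in>(\<lambda>d. p * d) ` Z. d) = p * (\<Sum>d\<in>Z. d)" for Z
    by (simp add: sum.reindex[OF inj] sum_distrib_left)
  have e0: "sigma (p * m) = (\<Sum>d\<in>X \<union> Y. d)" unfolding sigma_def X_def Y_def divisors_pm[OF p m] ..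
  have e: "sigma (p * m) + (\<Sum>d\<in>X \<inter> Y. d) = (p + 1) * sigma m"
    using sum.union_inter[OF fin finY, of "\<lambda>d. d"] e0 s1[of X] unfolding Y_def
    by (simp add: sigma_def X_def algebra_simps)
  show ?thesis
  proof (cases "p dvd m")
    case True
    then obtain k where k: "m = p * k" by blast
    have "X \<inter> Y = (\<lambda>d. p * d) ` {d. d dvd k}"
    proof (intro equalityI subsetI)
      fix x assume "x \<in> X \<inter> Y"
      then obtain e where "x = p * e" "p * e dvd m" unfolding X_def Y_def by auto
      then have "e dvd k" using p0 k by simp
      then show "x \<in> (\<lambda>d. p * d) ` {d. d dvd k}" using \<open>x = p * e\<close> by blast
    next
      fix x assume "x \<in> (\<lambda>d. p * d) ` {d. d dvd k}"
      then obtain e where "x = p * e" "e dvd k" by auto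
      then have "p * e dvd m" using k by simp
      moreover have "e dvd m" using \<open>e dvd k\<close> k by simp
      ultimately show "x \<in> X \<inter> Y" unfolding X_def Y_def using \<open>x = p * e\<close> by blast
    qed
    then have "(\<Sum>d\<in>X \<inter> Y. d) = p * sigma k" using s1 unfolding sigma_def by simp
    moreover have "m div p = k" using k p0 by simp
    ultimately show ?thesis using e True by simp
  next
    case False
    have "X \<inter> Y = {}"
    proof (rule ccontr)
      assume "X \<inter> Y \<noteq> {}"
      then obtain e where "p * e dvd m" unfolding X_def Y_def by auto
      then have "p dvd m" by (metis dvd_mult_left)
      then show False using False by blast
    qed
    then show ?thesis using e False by simp
  qed
qed

theorem A_sigma:
  assumes F1: "\<And>p. prime p \<Longrightarrow> odd p \<Longrightarrow> card (A p) = card (A 1) * (p + 1)"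
    and c1: "card (A 1) > 0"
  shows "odd n \<Longrightarrow> card (A n) = card (A 1) * sigma n"
proof (induction n rule: less_induct)
  case (less n)
  show ?case
  proof (cases "n = 1")
    case True
    then show ?thesis by (simp add: sigma_def)
  next
    case False
    have n0: "n > 0" using less.prems by (cases n) auto
    then have "n > 1" using False by simp
    then obtain p where p: "prime p" "p dvd n" using prime_factor_nat[of n] by auto
    then obtain m where m: "n = p * m" by blast
    have po: "odd p" using p(2) less.prems by (metis dvd_trans)
    have mo: "odd m" using m less.prems by simp
    have m0: "m > 0" using m n0 by (cases m) auto
    have p1: "p > 1" using p prime_gt_1_nat by blast
    have mlt: "m < n" using m p1 m0 by simp
    have IHm: "card (A m) = card (A 1) * sigma m" using less.IH[OF mlt mo] .
    have IHq: "card (A (m div p)) = card (A 1) * sigma (m div p)" if "p dvd m"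
    proof -
      have "m div p < n" using mlt by (meson div_le_dividend le_less_trans)
      moreover have "odd (m div p)" using that mo by (metis dvd_mult_div_cancel even_mult_iff)
      ultimately show ?thesis using less.IH by blast
    qed
    have r1: "card (A (p * m)) + p * (if p dvd m then card (A (m div p)) else 0) = (p + 1) * card (A m)"
      by (rule hecke_rec[OF p(1) F1[OF p(1) po] c1])
    have r2: "sigma (p * m) + p * (if p dvd m then sigma (m div p) else 0) = (p + 1) * sigma m"
      by (rule sigma_rec[OF p(1) m0])
    define Dq where "Dq = (if p dvd m then sigma (m div p) else 0)"
    have r1': "card (A (p * m)) + card (A 1) * (p * Dq) = card (A 1) * ((p + 1) * sigma m)"
    proof (cases "p dvd m")
      case True
      then show ?thesis using r1 IHm IHq[OF True] unfolding Dq_def by (simp add: algebra_simps)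
    next
      case False
      then show ?thesis using r1 IHm unfolding Dq_def by (simp add: algebra_simps)
    qed
    have r2': "card (A 1) * ((p + 1) * sigma m) = card (A 1) * sigma (p * m) + card (A 1) * (p * Dq)"
      using r2 unfolding Dq_def by (simp add: distrib_left[symmetric])
    have "card (A (p * m)) = card (A 1) * sigma (p * m)" using r1' r2' by linarith
    then show ?thesis using m by simp
  qed
qed


locale oddp =
  fixes P :: int
  assumes prm: "prime P" and odP: "odd P"
begin

definition R where "R = {0..<P}"

lemma P_gt1: "P > 1" using prm prime_gt_1_int by blast
lemma P_ge3: "P \<ge> 3" using P_gt1 odP by presburger
lemma finR: "finite R" by (simp add: R_def)
lemma cardR: "card R = nat P" by (simp add: R_def)
lemma mod_in_R: "x mod P \<in> R" using P_gt1 by (simp add: R_def)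

lemma pdvd_mult: "P dvd a * b \<Longrightarrow> P dvd a \<or> P dvd b"
  using prm by (simp add: prime_dvd_mult_iff)

lemma inv_mod: "\<not> P dvd c \<Longrightarrow> \<exists>c'. P dvd (c * c' - 1)"
proof -
  assume "\<not> P dvd c"
  then have "coprime P c" using prm by (rule_tac prime_imp_coprime) auto
  then have "gcd c P = 1" by (simp add: coprime_iff_gcd_eq_1 gcd.commute)
  then obtain u v where "u * c + v * P = 1" using bezout_int[of c P] by auto
  then have "c * u - 1 = P * (- v)" by (simp add: algebra_simps)
  then show ?thesis by (intro exI[of _ u]) (metis dvd_triv_left)
qed

lemma R_eq: "a \<in> R \<Longrightarrow> b \<in> R \<Longrightarrow> P dvd (a - b) \<Longrightarrow> a = b"
proof -
  assume "a \<in> R" "b \<in> R" "P dvd (a - b)"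
  have lt: "\<bar>a - b\<bar> < P" using \<open>a \<in> R\<close> \<open>b \<in> R\<close> by (auto simp: R_def)
  show ?thesis
  proof (rule ccontr)
    assume "a \<noteq> b"
    then have "\<bar>P\<bar> \<le> \<bar>a - b\<bar>" using dvd_imp_le_int \<open>P dvd (a - b)\<close> by simp
    then show False using lt P_gt1 by simp
  qed
qed

lemma mod_eq_dvd: "a mod P = b mod P \<longleftrightarrow> P dvd (a - b)"
  by (simp add: mod_eq_dvd_iff)

definition N2 :: "int \<Rightarrow> nat" where "N2 t = card {(a, b). a \<in> R \<and> b \<in> R \<and> (a^2 + b^2) mod P = t}"

lemma sq_inj_half:
  assumes "a \<in> {0..(P - 1) div 2}" "a' \<in> {0..(P - 1) div 2}" "P dvd (a^2 - a'^2)"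
  shows "a = a'"
proof -
  have "a^2 - a'^2 = (a - a') * (a + a')" by (simp add: power2_eq_square algebra_simps)
  then have "P dvd (a - a') \<or> P dvd (a + a')" using assms(3) pdvd_mult by auto
  moreover have "a \<in> R" "a' \<in> R" using assms P_gt1 by (auto simp: R_def)
  moreover have "a + a' < P" "a + a' \<ge> 0" using assms by auto
  moreover have "a + a' \<in> R" using \<open>a + a' < P\<close> \<open>a + a' \<ge> 0\<close> by (simp add: R_def)
  moreover have "(0::int) \<in> R" using P_gt1 by (simp add: R_def)
  ultimately consider "a = a'" | "a + a' = 0" using R_eq[of a a'] R_eq[of "a + a'" 0] by auto
  then show ?thesis using assms(1,2) by cases auto
qed

lemma two_squares_exist: "\<exists>a\<in>R. \<exists>b\<in>R. (a^2 + b^2) mod P = t mod P"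
proof (rule ccontr)
  assume nex: "\<not> ?thesis"
  define H where "H = {0..(P - 1) div 2}"
  define f where "f a = a^2 mod P" for a
  define g where "g b = (t - b^2) mod P" for b
  have injf: "inj_on f H"
    by (rule inj_onI) (use sq_inj_half in \<open>auto simp: f_def H_def mod_eq_dvd\<close>)
  have injg: "inj_on g H"
  proof (rule inj_onI)
    fix x y assume "x \<in> H" "y \<in> H" "g x = g y"
    then have "P dvd ((t - x^2) - (t - y^2))" by (simp add: g_def mod_eq_dvd)
    then have "P dvd (y^2 - x^2)" by (simp add: algebra_simps)
    then show "x = y" using sq_inj_half \<open>x \<in> H\<close> \<open>y \<in> H\<close> unfolding H_def by metis
  qed
  have disj: "f ` H \<inter> g ` H = {}"
  proof (rule ccontr)
    assume "f ` H \<inter> g ` H \<noteq> {}"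
    then obtain a b where ab: "a \<in> H" "b \<in> H" "f a = g b" by blast
    then have "P dvd (a^2 - (t - b^2))" by (simp add: f_def g_def mod_eq_dvd)
    then have "(a^2 + b^2) mod P = t mod P" by (simp add: mod_eq_dvd algebra_simps)
    moreover have "a \<in> R" "b \<in> R" using ab P_gt1 by (auto simp: H_def R_def)
    ultimately show False using nex by blast
  qed
  have sub: "f ` H \<union> g ` H \<subseteq> R" using mod_in_R by (auto simp: f_def g_def)
  have cH: "card H = nat ((P - 1) div 2 + 1)" by (simp add: H_def)
  have "card (f ` H \<union> g ` H) = card (f ` H) + card (g ` H)"
    by (rule card_Un_disjoint) (use disj in \<open>auto simp: H_def\<close>)
  also have "\<dots> = 2 * card H" using card_image[OF injf] card_image[OF injg] by simp
  also have "\<dots> = nat P + 1" using cH odP P_gt1 by (auto elim!: oddE)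
  finally have "card (f ` H \<union> g ` H) = nat P + 1" .
  moreover have "card (f ` H \<union> g ` H) \<le> card R" by (rule card_mono[OF finR sub])
  ultimately show False using cardR by simp
qed

end

context oddp begin

lemma sq_mod: "((x mod P)^2 + (y mod P)^2) mod P = (x^2 + y^2) mod P"
proof -
  have "((x mod P)^2 + (y mod P)^2) mod P = ((x mod P)^2 mod P + (y mod P)^2 mod P) mod P"
    by (rule mod_add_eq[symmetric])
  also have "\<dots> = (x^2 mod P + y^2 mod P) mod P" by (simp only: power_mod)
  also have "\<dots> = (x^2 + y^2) mod P" by (rule mod_add_eq)
  finally show ?thesis .
qed

lemma N2_scale:
  assumes t: "t \<in> R" and nd: "\<not> P dvd (c^2 + d^2)"
  shows "N2 t \<le> N2 ((t * (c^2 + d^2)) mod P)"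
proof -
  define S where "S s = {(a, b). a \<in> R \<and> b \<in> R \<and> (a^2 + b^2) mod P = s}" for s
  define h where "h = (\<lambda>(a, b). ((a * c - b * d) mod P, (a * d + b * c) mod P))"
  have img: "h ` S t \<subseteq> S ((t * (c^2 + d^2)) mod P)"
  proof
    fix z assume "z \<in> h ` S t"
    then obtain a b where ab: "a \<in> R" "b \<in> R" "(a^2 + b^2) mod P = t" "z = h (a, b)" unfolding S_def by auto
    have id: "(a * c - b * d)^2 + (a * d + b * c)^2 = (a^2 + b^2) * (c^2 + d^2)"
      by (simp add: power2_eq_square algebra_simps)
    have "(((a * c - b * d) mod P)^2 + ((a * d + b * c) mod P)^2) mod P = ((a^2 + b^2) * (c^2 + d^2)) mod P"
      using sq_mod id by simp
    also have "\<dots> = (((a^2 + b^2) mod P) * (c^2 + d^2)) mod P" by (simp add: mod_mult_left_eq)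
    also have "\<dots> = (t * (c^2 + d^2)) mod P" using ab(3) by simp
    finally show "z \<in> S ((t * (c^2 + d^2)) mod P)" using ab(4) mod_in_R unfolding S_def h_def by auto
  qed
  have inj: "inj_on h (S t)"
  proof (rule inj_onI)
    fix z z' assume z: "z \<in> S t" "z' \<in> S t" "h z = h z'"
    obtain a b where ab: "z = (a, b)" "a \<in> R" "b \<in> R" using z(1) unfolding S_def by auto
    obtain a' b' where ab': "z' = (a', b')" "a' \<in> R" "b' \<in> R" using z(2) unfolding S_def by auto
    define x where "x = a - a'"
    define y where "y = b - b'"
    have e1: "P dvd (x * c - y * d)" using z(3) ab ab' unfolding h_def x_def y_def
      by (auto simp: mod_eq_dvd algebra_simps)
    have e2: "P dvd (x * d + y * c)" using z(3) ab ab' unfolding h_def x_def y_def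
      by (auto simp: mod_eq_dvd algebra_simps)
    have "x * (c^2 + d^2) = (x * c - y * d) * c + (x * d + y * c) * d" by (simp add: power2_eq_square algebra_simps)
    then have "P dvd x * (c^2 + d^2)" using e1 e2 by simp
    then have "P dvd x" using nd pdvd_mult by blast
    moreover have "y * (c^2 + d^2) = (x * d + y * c) * c - (x * c - y * d) * d" by (simp add: power2_eq_square algebra_simps)
    then have "P dvd y * (c^2 + d^2)" using e1 e2 by simp
    then have "P dvd y" using nd pdvd_mult by blast
    ultimately show "z = z'" using ab ab' R_eq unfolding x_def y_def by auto
  qed
  have fin: "finite (S s)" for s
    by (rule finite_subset[of _ "R \<times> R"]) (auto simp: S_def finR)
  have "card (S t) \<le> card (S ((t * (c^2 + d^2)) mod P))"
    using card_image[OF inj] card_mono[OF fin img] by simp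
  then show ?thesis unfolding N2_def S_def .
qed

lemma N2_const:
  assumes t: "t \<in> R" "t \<noteq> 0" and t': "t' \<in> R" "t' \<noteq> 0"
  shows "N2 t \<le> N2 t'"
proof -
  have nt: "\<not> P dvd t" using t R_eq[of t 0] P_gt1 by (auto simp: R_def)
  have nt': "\<not> P dvd t'" using t' R_eq[of t' 0] P_gt1 by (auto simp: R_def)
  obtain ti where ti: "P dvd (t * ti - 1)" using inv_mod[OF nt] by blast
  have nti: "\<not> P dvd ti"
  proof
    assume "P dvd ti"
    then have "P dvd t * ti" by simp
    then have "P dvd (t * ti - (t * ti - 1))" using ti dvd_diff by blast
    then have "P dvd 1" by simp
    then show False using P_gt1 by simp
  qed
  define u where "u = t' * ti"
  have nu: "\<not> P dvd u" using nt' nti pdvd_mult unfolding u_def by blast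
  obtain c d where cd: "(c^2 + d^2) mod P = u mod P" using two_squares_exist[of u] by blast
  have ncd: "\<not> P dvd (c^2 + d^2)" using cd nu by (simp add: dvd_eq_mod_eq_0)
  have "(t * (c^2 + d^2)) mod P = (t * ((c^2 + d^2) mod P)) mod P" by (simp add: mod_mult_right_eq)
  also have "\<dots> = (t * (u mod P)) mod P" using cd by simp
  also have "\<dots> = (t * u) mod P" by (simp add: mod_mult_right_eq)
  also have "\<dots> = t' mod P"
  proof -
    have "t * u - t' = t' * (t * ti - 1)" unfolding u_def by (simp add: algebra_simps)
    then have "P dvd (t * u - t')" using ti by simp
    then show ?thesis by (simp add: mod_eq_dvd)
  qed
  also have "\<dots> = t'" using t' by (simp add: R_def)
  finally show ?thesis using N2_scale[OF t(1) ncd] by simp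
qed

end

context oddp begin

lemma R0: "0 \<in> R" using P_gt1 by (simp add: R_def)
lemma R_nz_ndvd: "t \<in> R \<Longrightarrow> t \<noteq> 0 \<Longrightarrow> \<not> P dvd t"
  using R_eq[of t 0] R0 by auto

lemma N2_zero: "N2 0 = 1 \<or> N2 0 = 2 * nat P - 1"
proof (cases "\<exists>i\<in>R. P dvd (i^2 + 1)")
  case False
  have "{(a, b). a \<in> R \<and> b \<in> R \<and> (a^2 + b^2) mod P = 0} = {(0, 0)}"
  proof (intro equalityI subsetI)
    fix z assume "z \<in> {(a, b). a \<in> R \<and> b \<in> R \<and> (a^2 + b^2) mod P = 0}"
    then obtain a b where ab: "z = (a, b)" "a \<in> R" "b \<in> R" "P dvd (a^2 + b^2)" by (auto simp: dvd_eq_mod_eq_0)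
    have "b = 0"
    proof (rule ccontr)
      assume "b \<noteq> 0"
      then obtain bi where bi: "P dvd (b * bi - 1)" using inv_mod R_nz_ndvd ab(3) by blast
      define i where "i = (a * bi) mod P"
      have "P dvd ((a * bi)^2 + 1)"
      proof -
        have "(a * bi)^2 + 1 = bi^2 * (a^2 + b^2) - (b * bi - 1) * (b * bi + 1)"
          by (simp add: power2_eq_square algebra_simps)
        then show ?thesis using ab(4) bi by simp
      qed
      then have "P dvd (i^2 + 1)" unfolding i_def
        by (metis dvd_eq_mod_eq_0 mod_add_left_eq power_mod)
      moreover have "i \<in> R" unfolding i_def by (rule mod_in_R)
      ultimately show False using False by blast
    qed
    then have "P dvd a * a" using ab(4) by (simp add: power2_eq_square)
    then have "P dvd a" using pdvd_mult by blast
    then have "a = 0" using R_nz_ndvd ab(2) by blast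
    then show "z \<in> {(0, 0)}" using ab \<open>b = 0\<close> by simp
  qed (use R0 in auto)
  then show ?thesis unfolding N2_def by simp
next
  case True
  then obtain i where i: "i \<in> R" "P dvd (i^2 + 1)" by blast
  have ni: "\<not> P dvd i"
  proof
    assume "P dvd i" then have "P dvd i^2" by (simp add: power2_eq_square)
    then have "P dvd 1" using i(2) by (metis dvd_add_right_iff)
    then show False using P_gt1 by simp
  qed
  define R' where "R' = R - {0}"
  define f where "f b = ((i * b) mod P, b)" for b
  define g where "g b = ((- i * b) mod P, b)" for b
  have "{(a, b). a \<in> R \<and> b \<in> R \<and> (a^2 + b^2) mod P = 0} = {(0, 0)} \<union> (f ` R' \<union> g ` R')"
  proof (intro equalityI subsetI)
    fix z assume "z \<in> {(a, b). a \<in> R \<and> b \<in> R \<and> (a^2 + b^2) mod P = 0}"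
    then obtain a b where ab: "z = (a, b)" "a \<in> R" "b \<in> R" "P dvd (a^2 + b^2)" by (auto simp: dvd_eq_mod_eq_0)
    show "z \<in> {(0, 0)} \<union> (f ` R' \<union> g ` R')"
    proof (cases "b = 0")
      case True
      then have "P dvd a * a" using ab(4) by (simp add: power2_eq_square)
      then have "a = 0" using pdvd_mult R_nz_ndvd ab(2) by blast
      then show ?thesis using ab True by simp
    next
      case False
      have "(a - i * b) * (a + i * b) = (a^2 + b^2) - b^2 * (i^2 + 1)" by (simp add: power2_eq_square algebra_simps)
      then have "P dvd (a - i * b) * (a + i * b)" using ab(4) i(2) by simp
      then consider "P dvd (a - i * b)" | "P dvd (a + i * b)" using pdvd_mult by blast
      then show ?thesis
      proof cases
        case 1
        then have "a = (i * b) mod P" using ab(2) mod_in_R R_eq[of a "(i * b) mod P"]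
          by (metis mod_eq_dvd mod_mod_trivial dvd_minus_mod)
        then show ?thesis using ab False unfolding f_def R'_def by auto
      next
        case 2
        then have "P dvd (a - (- i * b))" by simp
        then have "a = (- i * b) mod P" using ab(2) mod_in_R R_eq[of a "(- i * b) mod P"]
          by (metis mod_eq_dvd mod_mod_trivial dvd_minus_mod)
        then show ?thesis using ab False unfolding g_def R'_def by auto
      qed
    qed
  next
    fix z assume "z \<in> {(0, 0)} \<union> (f ` R' \<union> g ` R')"
    then consider "z = (0, 0)" | b where "b \<in> R'" "z = f b" | b where "b \<in> R'" "z = g b" by blast
    then show "z \<in> {(a, b). a \<in> R \<and> b \<in> R \<and> (a^2 + b^2) mod P = 0}"
    proof cases
      case 1 then show ?thesis using R0 by simp
    next
      case 2
      have "(((i * b) mod P)^2 + b^2) mod P = ((i * b)^2 + b^2) mod P"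
        by (metis mod_add_left_eq power_mod)
      also have "(i * b)^2 + b^2 = b^2 * (i^2 + 1)" by (simp add: power2_eq_square algebra_simps)
      finally have "(((i * b) mod P)^2 + b^2) mod P = 0" using i(2) by (simp add: dvd_eq_mod_eq_0[symmetric])
      then show ?thesis using 2 mod_in_R unfolding f_def R'_def by auto
    next
      case 3
      have "(((- i * b) mod P)^2 + b^2) mod P = ((- i * b)^2 + b^2) mod P"
        by (metis mod_add_left_eq power_mod)
      also have "(- i * b)^2 + b^2 = b^2 * (i^2 + 1)" by (simp add: power2_eq_square algebra_simps)
      finally have "(((- i * b) mod P)^2 + b^2) mod P = 0" using i(2) by (simp add: dvd_eq_mod_eq_0[symmetric])
      then show ?thesis using 3 mod_in_R unfolding g_def R'_def by auto
    qed
  qed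
  moreover have "(0, 0) \<notin> f ` R' \<union> g ` R'" unfolding f_def g_def R'_def by auto
  moreover have "f ` R' \<inter> g ` R' = {}"
  proof (rule ccontr)
    assume "f ` R' \<inter> g ` R' \<noteq> {}"
    then obtain b where b: "b \<in> R'" "(i * b) mod P = (- i * b) mod P" unfolding f_def g_def by auto
    then have "P dvd (i * b - (- i * b))" by (simp add: mod_eq_dvd)
    then have "P dvd (2 * i) * b" by (simp add: algebra_simps)
    then have "P dvd 2 * i \<or> P dvd b" using pdvd_mult by blast
    moreover have "\<not> P dvd 2"
    proof
      assume "P dvd 2" then have "P \<le> 2" using zdvd_imp_le by simp
      then show False using P_ge3 by simp
    qed
    ultimately show False using ni pdvd_mult R_nz_ndvd b(1) unfolding R'_def by blast
  qed
  moreover have "inj_on f R'" "inj_on g R'" unfolding f_def g_def by (auto intro: inj_onI)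
  moreover have "finite R'" using finR by (simp add: R'_def)
  moreover have "card R' = nat P - 1" using cardR R0 finR by (simp add: R'_def)
  ultimately have "N2 0 = 1 + (2 * (nat P - 1))" unfolding N2_def
    by (simp add: card_Un_disjoint card_image)
  then show ?thesis using P_gt1 by auto
qed

end

context oddp begin

definition Q0set where "Q0set = {(a, b, c, d). a \<in> R \<and> b \<in> R \<and> c \<in> R \<and> d \<in> R \<and> P dvd (a^2 + b^2 + c^2 + d^2)}"

lemma N2_set: "{(a, b). a \<in> R \<and> b \<in> R \<and> (a^2 + b^2) mod P = t} = {x \<in> R \<times> R. (\<lambda>(a, b). (a^2 + b^2) mod P) x = t}"
  by auto

lemma sum_N2: "(\<Sum>t\<in>R. N2 t) = nat P * nat P"
proof -
  define f where "f = (\<lambda>(a::int, b::int). (a^2 + b^2) mod P)"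
  have "card (R \<times> R) = (\<Sum>t\<in>R. card {x \<in> R \<times> R. f x = t})"
  proof -
    have "R \<times> R = (\<Union>t\<in>R. {x \<in> R \<times> R. f x = t})" using mod_in_R unfolding f_def by auto
    then have "card (R \<times> R) = card (\<Union>t\<in>R. {x \<in> R \<times> R. f x = t})" by simp
    also have "\<dots> = (\<Sum>t\<in>R. card {x \<in> R \<times> R. f x = t})"
      by (rule card_UN_disjoint) (use finR in auto)
    finally show ?thesis .
  qed
  then show ?thesis unfolding N2_def using N2_set cardR unfolding f_def by (simp add: card_cartesian_product)
qed

lemma Q0_sum: "card Q0set = (\<Sum>t\<in>R. N2 t * N2 ((- t) mod P))"
proof -
  define f where "f = (\<lambda>(a::int, b::int). (a^2 + b^2) mod P)"
  define B where "B x = {(c, d). c \<in> R \<and> d \<in> R \<and> (c^2 + d^2) mod P = (- f x) mod P}" for x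
  have finB: "finite (B x)" for x by (rule finite_subset[of _ "R \<times> R"]) (auto simp: B_def finR)
  have "Q0set = (\<lambda>((a, b), (c, d)). (a, b, c, d)) ` (SIGMA x:R \<times> R. B x)"
  proof (intro equalityI subsetI)
    fix z assume "z \<in> Q0set"
    then obtain a b c d where z: "z = (a, b, c, d)" "a \<in> R" "b \<in> R" "c \<in> R" "d \<in> R" "P dvd (a^2 + b^2 + c^2 + d^2)"
      unfolding Q0set_def by auto
    have "(c^2 + d^2) mod P = (- (a^2 + b^2)) mod P"
      using z(6) by (simp add: mod_eq_dvd algebra_simps)
    also have "\<dots> = (- ((a^2 + b^2) mod P)) mod P" by (simp add: mod_minus_eq)
    finally have "(c, d) \<in> B (a, b)" using z unfolding B_def f_def by auto
    then show "z \<in> (\<lambda>((a, b), (c, d)). (a, b, c, d)) ` (SIGMA x:R \<times> R. B x)"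
      using z by (auto intro!: image_eqI[of _ _ "((a, b), (c, d))"])
  next
    fix z assume "z \<in> (\<lambda>((a, b), (c, d)). (a, b, c, d)) ` (SIGMA x:R \<times> R. B x)"
    then obtain a b c d where z: "z = (a, b, c, d)" "a \<in> R" "b \<in> R" "(c, d) \<in> B (a, b)" by auto
    then have cd: "c \<in> R" "d \<in> R" "(c^2 + d^2) mod P = (- ((a^2 + b^2) mod P)) mod P" unfolding B_def f_def by auto
    have "(- ((a^2 + b^2) mod P)) mod P = (- (a^2 + b^2)) mod P" by (simp add: mod_minus_eq)
    then have "P dvd ((c^2 + d^2) - (- (a^2 + b^2)))" using cd(3) by (simp add: mod_eq_dvd[symmetric])
    then have "P dvd (a^2 + b^2 + c^2 + d^2)" by (simp add: algebra_simps)
    then show "z \<in> Q0set" using z cd unfolding Q0set_def by auto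
  qed
  moreover have "inj_on (\<lambda>((a, b), (c, d)). (a::int, b::int, c::int, d::int)) X" for X
    by (auto intro!: inj_onI)
  ultimately have "card Q0set = card (SIGMA x:R \<times> R. B x)" by (simp add: card_image)
  also have "\<dots> = (\<Sum>x\<in>R \<times> R. card (B x))" using finR finB by simp
  also have "\<dots> = (\<Sum>x\<in>R \<times> R. N2 ((- f x) mod P))"
    unfolding B_def N2_def by simp
  also have "\<dots> = (\<Sum>t\<in>R. (\<Sum>x\<in>{x. x \<in> R \<times> R \<and> f x = t}. N2 ((- f x) mod P)))"
    by (rule sum.group[symmetric]) (use finR mod_in_R in \<open>auto simp: f_def\<close>)
  also have "\<dots> = (\<Sum>t\<in>R. N2 t * N2 ((- t) mod P))"
  proof (rule sum.cong[OF refl])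
    fix t assume "t \<in> R"
    have "(\<Sum>x\<in>{x. x \<in> R \<times> R \<and> f x = t}. N2 ((- f x) mod P)) = (\<Sum>x\<in>{x. x \<in> R \<times> R \<and> f x = t}. N2 ((- t) mod P))"
      by (rule sum.cong) auto
    also have "\<dots> = card {x. x \<in> R \<times> R \<and> f x = t} * N2 ((- t) mod P)" by simp
    also have "card {x. x \<in> R \<times> R \<and> f x = t} = N2 t" unfolding N2_def f_def
      by (rule arg_cong[of _ _ card]) auto
    finally show "(\<Sum>x\<in>{x. x \<in> R \<times> R \<and> f x = t}. N2 ((- f x) mod P)) = N2 t * N2 ((- t) mod P)" .
  qed
  finally show ?thesis .
qed

lemma Q0_card: "int (card Q0set) = P^3 + P^2 - P"
proof -
  have R1: "1 \<in> R" using P_gt1 by (simp add: R_def)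
  define K where "K = N2 1"
  have NK: "N2 t = K" if "t \<in> R" "t \<noteq> 0" for t
    using N2_const[OF that R1] N2_const[OF R1 _ that] unfolding K_def by (simp add: antisym)
  have neg: "(- t) mod P \<in> R" "(- t) mod P \<noteq> 0" if "t \<in> R" "t \<noteq> 0" for t
  proof -
    show "(- t) mod P \<in> R" by (rule mod_in_R)
    show "(- t) mod P \<noteq> 0" using R_nz_ndvd[OF that] by (simp add: dvd_eq_mod_eq_0[symmetric])
  qed
  have n0: "(- 0) mod P = (0::int)" by simp
  have s1: "(\<Sum>t\<in>R. N2 t) = N2 0 + (nat P - 1) * K"
  proof -
    have "(\<Sum>t\<in>R. N2 t) = N2 0 + (\<Sum>t\<in>R - {0}. N2 t)" using sum.remove[OF finR R0] by simp
    also have "(\<Sum>t\<in>R - {0}. N2 t) = (\<Sum>t\<in>R - {0}. K)" using NK by (intro sum.cong) auto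
    also have "\<dots> = (nat P - 1) * K" using cardR finR R0 by simp
    finally show ?thesis .
  qed
  have s2: "card Q0set = N2 0 * N2 0 + (nat P - 1) * (K * K)"
  proof -
    have "card Q0set = N2 0 * N2 ((- 0) mod P) + (\<Sum>t\<in>R - {0}. N2 t * N2 ((- t) mod P))"
      using Q0_sum sum.remove[OF finR R0, of "\<lambda>t. N2 t * N2 ((- t) mod P)"] by simp
    also have "(\<Sum>t\<in>R - {0}. N2 t * N2 ((- t) mod P)) = (\<Sum>t\<in>R - {0}. K * K)"
      using NK neg by (intro sum.cong) auto
    also have "\<dots> = (nat P - 1) * (K * K)" using cardR finR R0 by simp
    finally show ?thesis by simp
  qed
  have np: "int (nat P) = P" "int (nat P - 1) = P - 1" using P_gt1 by auto
  have "N2 0 + (nat P - 1) * K = nat P * nat P" using s1 sum_N2 by simp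
  then have "int (N2 0 + (nat P - 1) * K) = int (nat P * nat P)" by simp
  then have e1: "int (N2 0) + (P - 1) * int K = P * P" using np by (simp only: of_nat_add of_nat_mult)
  have e2: "int (card Q0set) = int (N2 0) * int (N2 0) + (P - 1) * (int K * int K)" using s2 P_gt1
    by (simp add: of_nat_diff)
  consider "N2 0 = 1" | "N2 0 = 2 * nat P - 1" using N2_zero by blast
  then show ?thesis
  proof cases
    case 1
    then have "(P - 1) * int K = (P - 1) * (P + 1)" using e1 by (simp add: algebra_simps)
    then have kk: "int K = P + 1" using P_gt1 by simp
    have "int (card Q0set) = 1 * 1 + (P - 1) * ((P + 1) * (P + 1))" using e2 1 kk by simp
    then show ?thesis by (simp add: power2_eq_square power3_eq_cube algebra_simps)
  next
    case 2
    then have i0: "int (N2 0) = 2 * P - 1" using P_gt1 by simp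
    then have "(P - 1) * int K = (P - 1) * (P - 1)" using e1 by (simp add: algebra_simps)
    then have kk: "int K = P - 1" using P_gt1 by simp
    have "int (card Q0set) = (2 * P - 1) * (2 * P - 1) + (P - 1) * ((P - 1) * (P - 1))"
      using e2 i0 kk by (simp only:)
    then show ?thesis by (simp add: power2_eq_square power3_eq_cube algebra_simps)
  qed
qed

end

locale qp =
  fixes p :: nat
  assumes pp: "prime p" and op: "odd p"
begin

sublocale oddp "int p" by unfold_locales (use pp op in auto)

definition cng :: "quat \<Rightarrow> quat \<Rightarrow> bool" where "cng u v \<longleftrightarrow> pdvd p (u - v)"

lemma p_pos: "p > 0" using pp prime_gt_0_nat by blast

lemma pdvd_0: "pdvd p 0" unfolding pdvd_def by (intro exI[of _ 0]) simp
lemma pdvd_add: "pdvd p u \<Longrightarrow> pdvd p v \<Longrightarrow> pdvd p (u + v)"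
proof -
  assume "pdvd p u" "pdvd p v"
  then obtain s t where "hw s" "u = of_nat p * s" "hw t" "v = of_nat p * t" unfolding pdvd_def by blast
  then have "u + v = of_nat p * (s + t)" "hw (s + t)" by (simp_all add: distrib_left hw_add)
  then show ?thesis unfolding pdvd_def by blast
qed
lemma pdvd_uminus: "pdvd p u \<Longrightarrow> pdvd p (- u)"
proof -
  assume "pdvd p u"
  then obtain s where "hw s" "u = of_nat p * s" unfolding pdvd_def by blast
  then have "- u = of_nat p * (- s)" "hw (- s)" by (simp_all add: hw_uminus)
  then show ?thesis unfolding pdvd_def by blast
qed
lemma pdvd_diff: "pdvd p u \<Longrightarrow> pdvd p v \<Longrightarrow> pdvd p (u - v)"
  using pdvd_add[of u "- v"] pdvd_uminus[of v] by simp
lemma pdvd_lmult: "pdvd p u \<Longrightarrow> hw w \<Longrightarrow> pdvd p (w * u)"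
proof -
  assume "pdvd p u" "hw w"
  then obtain s where "hw s" "u = of_nat p * s" unfolding pdvd_def by blast
  then have "w * u = (w * of_nat p) * s" by (simp add: mult.assoc)
  also have "\<dots> = of_nat p * (w * s)" by (simp add: of_nat_comm[symmetric] mult.assoc)
  finally have "w * u = of_nat p * (w * s)" "hw (w * s)" using \<open>hw w\<close> \<open>hw s\<close> by (simp_all add: hw_mult)
  then show ?thesis unfolding pdvd_def by blast
qed
lemma pdvd_rmult: "pdvd p u \<Longrightarrow> hw w \<Longrightarrow> pdvd p (u * w)"
proof -
  assume "pdvd p u" "hw w"
  then obtain s where "hw s" "u = of_nat p * s" unfolding pdvd_def by blast
  then have "u * w = of_nat p * (s * w)" "hw (s * w)" using \<open>hw w\<close>
    by (simp_all add: hw_mult mult.assoc)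
  then show ?thesis unfolding pdvd_def by blast
qed
lemma pdvd_p: "hw u \<Longrightarrow> pdvd p (of_nat p * u)" unfolding pdvd_def by blast

lemma cng_refl: "cng u u" by (simp add: cng_def pdvd_0)
lemma cng_sym: "cng u v \<Longrightarrow> cng v u"
  unfolding cng_def using pdvd_uminus[of "u - v"] by simp
lemma cng_trans: "cng u v \<Longrightarrow> cng v w \<Longrightarrow> cng u w"
  unfolding cng_def using pdvd_add[of "u - v" "v - w"] by simp
lemma cng_add: "cng u v \<Longrightarrow> cng u' v' \<Longrightarrow> cng (u + u') (v + v')"
proof -
  assume "cng u v" "cng u' v'"
  moreover have "(u + u') - (v + v') = (u - v) + (u' - v')" by simp
  ultimately show ?thesis unfolding cng_def using pdvd_add by metis
qed
lemma cng_diff: "cng u v \<Longrightarrow> cng u' v' \<Longrightarrow> cng (u - u') (v - v')"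
proof -
  assume "cng u v" "cng u' v'"
  moreover have "(u - u') - (v - v') = (u - v) - (u' - v')" by simp
  ultimately show ?thesis unfolding cng_def using pdvd_diff by metis
qed
lemma cng_lmult: "cng u v \<Longrightarrow> hw w \<Longrightarrow> cng (w * u) (w * v)"
  unfolding cng_def using pdvd_lmult[of "u - v" w] by (simp add: right_diff_distrib)
lemma cng_rmult: "cng u v \<Longrightarrow> hw w \<Longrightarrow> cng (u * w) (v * w)"
  unfolding cng_def using pdvd_rmult[of "u - v" w] by (simp add: left_diff_distrib)
lemma cng_0_iff: "cng u 0 \<longleftrightarrow> pdvd p u" by (simp add: cng_def)

definition toQ :: "int \<times> int \<times> int \<times> int \<Rightarrow> quat" where
  "toQ = (\<lambda>(a, b, c, d). Q (of_int a) (of_int b) (of_int c) (of_int d))"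
definition V where "V = toQ ` (R \<times> R \<times> R \<times> R)"

lemma toQ_inj: "inj toQ" unfolding toQ_def by (auto intro!: injI)
lemma card_V: "card V = p ^ 4"
proof -
  have "card V = card (R \<times> R \<times> R \<times> R)" unfolding V_def by (rule card_image) (rule inj_on_subset[OF toQ_inj], simp)
  also have "\<dots> = p ^ 4" using cardR by (simp add: card_cartesian_product power4_eq_xxxx)
  finally show ?thesis .
qed
lemma finite_V: "finite V" unfolding V_def using finR by simp
lemma lp_toQ: "lp (toQ x)" unfolding toQ_def lp_def by (auto split: prod.splits)
lemma V_hw: "x \<in> V \<Longrightarrow> hw x" unfolding V_def using lp_toQ lp_hw by auto
lemma zero_V: "0 \<in> V"
proof -
  have "toQ (0, 0, 0, 0) = 0" unfolding toQ_def by (auto intro: quat_eqI)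
  moreover have "(0, 0, 0, 0) \<in> R \<times> R \<times> R \<times> R" using R0 by simp
  ultimately show ?thesis unfolding V_def by (metis image_eqI)
qed

lemma hm: "(of_int a :: rat) - of_int (a mod int p) = of_nat p * of_int (a div int p)"
proof -
  have "a = int p * (a div int p) + a mod int p" by simp
  then have "(of_int a :: rat) = of_int (int p * (a div int p) + a mod int p)" by (rule arg_cong)
  also have "\<dots> = of_nat p * of_int (a div int p) + of_int (a mod int p)"
    by (simp only: of_int_add of_int_mult of_int_of_nat_eq)
  finally show ?thesis by simp
qed

lemma lp_p1: assumes "hw u" shows "lp (of_nat (p + 1) * u)"
proof -
  obtain k0 where "p = 2 * k0 + 1" using op by (auto elim: oddE)
  then obtain k where k: "p + 1 = 2 * k" by (intro that[of "k0 + 1"]) simp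
  consider "lp u" | "lp (u - om)" using assms unfolding hw_def by blast
  then show ?thesis
  proof cases
    case 1 then show ?thesis using lp_mult lp_of_int[of "int (p+1)"] by (metis of_int_of_nat_eq)
  next
    case 2
    have e1: "of_nat (p + 1) * u = of_nat (p + 1) * (u - om) + of_nat (p + 1) * om"
      by (simp add: algebra_simps)
    have e2: "(of_nat (p + 1) :: quat) * om = of_nat k * (om + om)"
    proof -
      have "(of_nat (p + 1) :: rat) = 2 * of_nat k" using k by simp
      then show ?thesis by (intro quat_eqI) (simp_all add: of_nat_quat)
    qed
    have "of_nat (p + 1) * u = of_nat (p + 1) * (u - om) + of_nat k * (om + om)"
      using e1 e2 by simp
    moreover have "lp (of_nat (p + 1) * (u - om))" using 2 lp_mult lp_of_int[of "int (p+1)"] by (metis of_int_of_nat_eq)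
    moreover have "lp (of_nat k * (om + om))" using lp_mult lp_of_int[of "int k"] lp_2om by (metis of_int_of_nat_eq)
    ultimately show ?thesis using lp_add by simp
  qed
qed

lemma lp_rep: assumes "lp l" shows "\<exists>x\<in>V. cng l x"
proof -
  obtain a b c d where l: "re l = of_int a" "qi l = of_int b" "qj l = of_int c" "qk l = of_int d"
    using assms unfolding lp_def by (auto elim!: Ints_cases)
  define x where "x = toQ (a mod int p, b mod int p, c mod int p, d mod int p)"
  define s where "s = toQ (a div int p, b div int p, c div int p, d div int p)"
  have "x \<in> V" unfolding x_def V_def using mod_in_R by auto
  moreover have "l - x = of_nat p * s"
  proof (rule quat_eqI)
    show "re (l - x) = re (of_nat p * s)" unfolding x_def s_def toQ_def using l hm
      by (simp add: of_nat_quat)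
    show "qi (l - x) = qi (of_nat p * s)" unfolding x_def s_def toQ_def using l hm
      by (simp add: of_nat_quat)
    show "qj (l - x) = qj (of_nat p * s)" unfolding x_def s_def toQ_def using l hm
      by (simp add: of_nat_quat)
    show "qk (l - x) = qk (of_nat p * s)" unfolding x_def s_def toQ_def using l hm
      by (simp add: of_nat_quat)
  qed
  moreover have "hw s" unfolding s_def using lp_toQ lp_hw by blast
  ultimately show ?thesis unfolding cng_def pdvd_def by blast
qed

lemma hw_rep_ex: assumes "hw u" shows "\<exists>x\<in>V. cng u x"
proof -
  have "cng u (of_nat (p + 1) * u)"
  proof -
    have "u - of_nat (p + 1) * u = of_nat p * (- u)" by (simp add: algebra_simps)
    then show ?thesis unfolding cng_def using pdvd_p[OF hw_uminus[OF assms]] by simp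
  qed
  moreover obtain x where "x \<in> V" "cng (of_nat (p + 1) * u) x" using lp_rep[OF lp_p1[OF assms]] by blast
  ultimately show ?thesis using cng_trans by blast
qed

lemma V_uniq: assumes "x \<in> V" "y \<in> V" "cng x y" shows "x = y"
proof -
  obtain a b c d where x: "x = toQ (a, b, c, d)" "a \<in> R" "b \<in> R" "c \<in> R" "d \<in> R" using assms(1) unfolding V_def by auto
  obtain a' b' c' d' where y: "y = toQ (a', b', c', d')" "a' \<in> R" "b' \<in> R" "c' \<in> R" "d' \<in> R" using assms(2) unfolding V_def by auto
  obtain s where s: "hw s" "x - y = of_nat p * s" using assms(3) unfolding cng_def pdvd_def by blast
  have tw: "2 * re s \<in> \<int>" "2 * qi s \<in> \<int>" "2 * qj s \<in> \<int>" "2 * qk s \<in> \<int>" using hw_twice[OF s(1)] by auto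
  have np: "\<not> int p dvd 2"
  proof
    assume "int p dvd 2" then have "int p \<le> 2" by (rule zdvd_imp_le) simp
    then show False using P_ge3 by simp
  qed
  have key: "e = e'" if k1: "e \<in> R" and k2: "e' \<in> R" and k3: "of_int (e - e') = (of_nat p * z :: rat)" and k4: "2 * z \<in> \<int>" for e e' z
  proof -
    obtain m where m: "2 * z = of_int m" using k4 by (auto elim!: Ints_cases)
    have "(of_int (2 * (e - e')) :: rat) = 2 * of_int (e - e')" by simp
    also have "\<dots> = of_nat p * (2 * z)" using k3 by simp
    also have "\<dots> = of_int (int p * m)" using m by simp
    finally have "(of_int (2 * (e - e')) :: rat) = of_int (int p * m)" .
    then have "2 * (e - e') = int p * m" by linarith
    then have "int p dvd 2 * (e - e')" by simp
    then have "int p dvd (e - e')" using pdvd_mult np by blast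
    then show ?thesis using R_eq k1 k2 by blast
  qed
  have "re (x - y) = re (of_nat p * s)" "qi (x - y) = qi (of_nat p * s)"
       "qj (x - y) = qj (of_nat p * s)" "qk (x - y) = qk (of_nat p * s)" using s(2) by simp_all
  then have "of_int (a - a') = (of_nat p * re s :: rat)" "of_int (b - b') = (of_nat p * qi s :: rat)"
            "of_int (c - c') = (of_nat p * qj s :: rat)" "of_int (d - d') = (of_nat p * qk s :: rat)"
    using x(1) y(1) by (simp_all add: toQ_def of_nat_quat)
  then have "a = a'" "b = b'" "c = c'" "d = d'" using key x y tw by blast+
  then show ?thesis using x y by simp
qed

definition rep :: "quat \<Rightarrow> quat" where "rep u = (THE x. x \<in> V \<and> cng u x)"

lemma rep: assumes "hw u" shows "rep u \<in> V" "cng u (rep u)"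
proof -
  obtain x where x: "x \<in> V" "cng u x" using hw_rep_ex[OF assms] by blast
  have "\<exists>!x. x \<in> V \<and> cng u x"
    using x V_uniq cng_trans cng_sym by (intro ex1I[of _ x]) blast+
  then have "rep u \<in> V \<and> cng u (rep u)" unfolding rep_def by (rule theI')
  then show "rep u \<in> V" "cng u (rep u)" by auto
qed

lemma rep_eq: assumes "hw u" "hw v" "cng u v" shows "rep u = rep v"
proof -
  have "cng (rep u) u" using rep(2)[OF assms(1)] by (rule cng_sym)
  then have "cng (rep u) v" using assms(3) by (rule cng_trans)
  then have "cng (rep u) (rep v)" using rep(2)[OF assms(2)] by (rule cng_trans)
  then show ?thesis using V_uniq rep(1)[OF assms(1)] rep(1)[OF assms(2)] by blast
qed

lemma rep_V: assumes "x \<in> V" shows "rep x = x"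
proof -
  have "cng x (rep x)" using rep(2)[OF V_hw[OF assms]] .
  then have "x = rep x" using V_uniq[OF assms rep(1)[OF V_hw[OF assms]]] by blast
  then show ?thesis by simp
qed

lemma V_not_pdvd: "x \<in> V \<Longrightarrow> x \<noteq> 0 \<Longrightarrow> \<not> pdvd p x"
  using V_uniq[of x 0] zero_V cng_0_iff by blast

lemma A_not_pdvd: assumes "\<pi> \<in> A p" shows "\<not> pdvd p \<pi>"
proof
  assume "pdvd p \<pi>"
  then obtain s where s: "hw s" "\<pi> = of_nat p * s" unfolding pdvd_def by blast
  have "nrm \<pi> = of_nat p ^ 2 * nrm s" using s(2) by (simp add: nrm_mult nrm_of_nat)
  then have "of_nat p = (of_nat p ^ 2 * of_int (inrm s) :: rat)" using assms inrm[OF s(1)] unfolding A_def by simp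
  then have "of_int (int p) = (of_int (int p * (int p * inrm s)) :: rat)" by (simp add: power2_eq_square)
  then have "int p = int p * (int p * inrm s)" by linarith
  then have "1 = int p * inrm s" using p_pos by simp
  then have "int p dvd 1" by (rule dvdI)
  then show False using P_gt1 by simp
qed

end

context qp begin

definition Phi where "Phi \<pi> y = rep (y * \<pi>)"
definition Rs where "Rs \<pi> = Phi \<pi> ` V"
definition ker where "ker \<pi> = {y \<in> V. pdvd p (y * \<pi>)}"

lemma A_hw: "\<pi> \<in> A n \<Longrightarrow> hw \<pi>" unfolding A_def by auto
lemma A_cnj: "\<pi> \<in> A n \<Longrightarrow> qcnj \<pi> \<in> A n" unfolding A_def by (auto simp: hw_cnj)
lemma A_pp: "\<pi> \<in> A n \<Longrightarrow> qcnj \<pi> * \<pi> = of_nat n" "\<pi> \<in> A n \<Longrightarrow> \<pi> * qcnj \<pi> = of_nat n"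
  unfolding A_def by (auto simp: qcnj_mult_self mult_cnj of_nat_sc)

lemma Rs_sub: "hw \<pi> \<Longrightarrow> Rs \<pi> \<subseteq> V" unfolding Rs_def Phi_def using rep V_hw hw_mult by auto

lemma Rs_iff: assumes pi: "\<pi> \<in> A p" and x: "x \<in> V" shows "x \<in> Rs \<pi> \<longleftrightarrow> rdvd \<pi> x"
proof
  assume "x \<in> Rs \<pi>"
  then obtain y where y: "y \<in> V" "x = rep (y * \<pi>)" unfolding Rs_def Phi_def by blast
  have hy: "hw (y * \<pi>)" using y V_hw A_hw[OF pi] hw_mult by blast
  have "cng (y * \<pi>) x" using rep(2)[OF hy] y(2) by simp
  then obtain t where t: "hw t" "y * \<pi> - x = of_nat p * t" unfolding cng_def pdvd_def by blast
  have "x = y * \<pi> - t * of_nat p" using t(2) by (simp add: of_nat_comm algebra_simps)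
  also have "\<dots> = (y - t * qcnj \<pi>) * \<pi>" using A_pp(1)[OF pi] by (simp add: algebra_simps mult.assoc)
  finally have "x = (y - t * qcnj \<pi>) * \<pi>" .
  moreover have "hw (y - t * qcnj \<pi>)" using y V_hw t(1) A_hw[OF pi] by (simp add: hw_diff hw_mult hw_cnj)
  ultimately show "rdvd \<pi> x" unfolding rdvd_def by blast
next
  assume "rdvd \<pi> x"
  then obtain s where s: "hw s" "x = s * \<pi>" unfolding rdvd_def by blast
  have "cng s (rep s)" using rep(2)[OF s(1)] .
  then have "cng (s * \<pi>) (rep s * \<pi>)" using cng_rmult A_hw[OF pi] by blast
  then have "rep (rep s * \<pi>) = rep (s * \<pi>)"
    using rep_eq cng_sym hw_mult s(1) A_hw[OF pi] rep(1)[OF s(1)] V_hw by metis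
  also have "\<dots> = x" using s(2) rep_V[OF x] by simp
  finally show "x \<in> Rs \<pi>" unfolding Rs_def Phi_def using rep(1)[OF s(1)] by (metis image_eqI)
qed

lemma fiber_card:
  assumes pi: "hw \<pi>" and y0: "y0 \<in> V"
  shows "card {y \<in> V. Phi \<pi> y = Phi \<pi> y0} = card (ker \<pi>)"
proof -
  define g where "g y = rep (y - y0)" for y
  define h where "h k = rep (k + y0)" for k
  have hwV: "\<And>y. y \<in> V \<Longrightarrow> hw y" by (rule V_hw)
  have phi_eq: "Phi \<pi> y = Phi \<pi> y0 \<longleftrightarrow> pdvd p ((y - y0) * \<pi>)" if "y \<in> V" for y
  proof
    assume "Phi \<pi> y = Phi \<pi> y0"
    then have "cng (y * \<pi>) (y0 * \<pi>)" unfolding Phi_def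
      using rep(2)[of "y * \<pi>"] rep(2)[of "y0 * \<pi>"] hw_mult hwV that y0 pi cng_trans cng_sym by metis
    then show "pdvd p ((y - y0) * \<pi>)" unfolding cng_def by (simp add: left_diff_distrib)
  next
    assume "pdvd p ((y - y0) * \<pi>)"
    then have "cng (y * \<pi>) (y0 * \<pi>)" unfolding cng_def by (simp add: left_diff_distrib)
    then show "Phi \<pi> y = Phi \<pi> y0" unfolding Phi_def using rep_eq hw_mult hwV that y0 pi by blast
  qed
  have gk: "pdvd p ((y - y0) * \<pi>) \<longleftrightarrow> pdvd p (g y * \<pi>)" if "y \<in> V" for y
  proof -
    have c: "cng ((y - y0) * \<pi>) (g y * \<pi>)" unfolding g_def
      using rep(2)[of "y - y0"] hw_diff hwV that y0 cng_rmult pi by blast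
    show ?thesis using cng_0_iff c cng_trans cng_sym by metis
  qed
  have "bij_betw g {y \<in> V. Phi \<pi> y = Phi \<pi> y0} (ker \<pi>)"
  proof (rule bij_betw_byWitness[where f' = h])
    show "\<forall>y\<in>{y \<in> V. Phi \<pi> y = Phi \<pi> y0}. h (g y) = y"
    proof
      fix y assume "y \<in> {y \<in> V. Phi \<pi> y = Phi \<pi> y0}"
      then have yV: "y \<in> V" by simp
      have "cng (g y + y0) (y - y0 + y0)" unfolding g_def
        using rep(2)[of "y - y0"] hw_diff hwV yV y0 cng_add cng_refl cng_sym by blast
      then have "h (g y) = rep y" unfolding h_def
        using rep_eq hw_add hw_diff hwV yV y0 rep(1)[of "y - y0"] unfolding g_def by (metis diff_add_cancel)
      then show "h (g y) = y" using rep_V[OF yV] by simp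
    qed
    show "\<forall>k\<in>ker \<pi>. g (h k) = k"
    proof
      fix k assume "k \<in> ker \<pi>"
      then have kV: "k \<in> V" unfolding ker_def by simp
      have "cng (h k - y0) (k + y0 - y0)" unfolding h_def
        using rep(2)[of "k + y0"] hw_add hwV kV y0 cng_diff cng_refl cng_sym by blast
      then have "g (h k) = rep k" unfolding g_def
        using rep_eq hw_add hw_diff hwV kV y0 rep(1)[of "k + y0"] unfolding h_def by (metis add_diff_cancel)
      then show "g (h k) = k" using rep_V[OF kV] by simp
    qed
    show "g ` {y \<in> V. Phi \<pi> y = Phi \<pi> y0} \<subseteq> ker \<pi>"
    proof
      fix z assume "z \<in> g ` {y \<in> V. Phi \<pi> y = Phi \<pi> y0}"
      then obtain y where y: "y \<in> V" "Phi \<pi> y = Phi \<pi> y0" "z = g y" by blast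
      have "g y \<in> V" unfolding g_def using rep(1) hw_diff hwV y(1) y0 by blast
      then show "z \<in> ker \<pi>" unfolding ker_def using y phi_eq gk by blast
    qed
    show "h ` ker \<pi> \<subseteq> {y \<in> V. Phi \<pi> y = Phi \<pi> y0}"
    proof
      fix z assume "z \<in> h ` ker \<pi>"
      then obtain k where k: "k \<in> ker \<pi>" "z = h k" by blast
      then have kV: "k \<in> V" "pdvd p (k * \<pi>)" unfolding ker_def by auto
      have hkV: "h k \<in> V" unfolding h_def using rep(1) hw_add hwV kV y0 by blast
      have "g (h k) = k"
      proof -
        have "cng (h k - y0) (k + y0 - y0)" unfolding h_def
          using rep(2)[of "k + y0"] hw_add hwV kV y0 cng_diff cng_refl cng_sym by blast
        then have "g (h k) = rep k" unfolding g_def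
          using rep_eq hw_add hw_diff hwV kV y0 rep(1)[of "k + y0"] unfolding h_def by (metis add_diff_cancel)
        then show ?thesis using rep_V[OF kV(1)] by simp
      qed
      then have "pdvd p (g (h k) * \<pi>)" using kV by simp
      then have "Phi \<pi> (h k) = Phi \<pi> y0" using phi_eq[OF hkV] gk[OF hkV] by blast
      then show "z \<in> {y \<in> V. Phi \<pi> y = Phi \<pi> y0}" using k hkV by blast
    qed
  qed
  then show ?thesis by (rule bij_betw_same_card)
qed

lemma card_Rs_ker: assumes "hw \<pi>" shows "card V = card (Rs \<pi>) * card (ker \<pi>)"
proof -
  have sub: "Phi \<pi> ` V \<subseteq> Rs \<pi>" unfolding Rs_def by simp
  have finRs: "finite (Rs \<pi>)" using Rs_sub[OF assms] finite_V finite_subset by blast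
  have "card V = (\<Sum>x\<in>Rs \<pi>. card {y \<in> V. Phi \<pi> y = x})"
    by (rule card_fibers[OF finite_V sub finRs])
  also have "\<dots> = (\<Sum>x\<in>Rs \<pi>. card (ker \<pi>))"
  proof (rule sum.cong[OF refl])
    fix x assume "x \<in> Rs \<pi>"
    then obtain y0 where "y0 \<in> V" "x = Phi \<pi> y0" unfolding Rs_def by blast
    then show "card {y \<in> V. Phi \<pi> y = x} = card (ker \<pi>)" using fiber_card[OF assms] by blast
  qed
  finally show ?thesis by simp
qed

lemma Rs_cnj_ker: assumes pi: "\<pi> \<in> A p" shows "Rs (qcnj \<pi>) \<subseteq> ker \<pi>"
proof
  fix y assume "y \<in> Rs (qcnj \<pi>)"
  then obtain s where s: "s \<in> V" "y = rep (s * qcnj \<pi>)" unfolding Rs_def Phi_def by blast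
  have hs: "hw (s * qcnj \<pi>)" using s V_hw A_hw[OF pi] hw_cnj hw_mult by blast
  have yV: "y \<in> V" using rep(1)[OF hs] s by simp
  have "cng (s * qcnj \<pi>) y" using rep(2)[OF hs] s by simp
  then have "cng (s * qcnj \<pi> * \<pi>) (y * \<pi>)" using cng_rmult A_hw[OF pi] by blast
  moreover have "s * qcnj \<pi> * \<pi> = of_nat p * s" using A_pp(1)[OF pi] by (simp add: mult.assoc of_nat_comm)
  ultimately have "cng (of_nat p * s) (y * \<pi>)" by simp
  moreover have "cng (of_nat p * s) 0" using pdvd_p V_hw s(1) cng_0_iff by blast
  ultimately have "cng (y * \<pi>) 0" using cng_trans cng_sym by blast
  then show "y \<in> ker \<pi>" using yV unfolding ker_def cng_0_iff by blast
qed

end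

definition ii :: quat where "ii = Q 0 1 0 0"
definition jj :: quat where "jj = Q 0 0 1 0"

lemma ii_jj: "ii * jj + jj * ii = 0" "ii * ii = -1" "jj * jj = -1"
  by (auto intro!: quat_eqI simp: ii_def jj_def)
lemma hw_ii: "hw ii" and hw_jj: "hw jj" by (auto simp: ii_def jj_def hw_def lp_def)

lemma of_int_comm: "of_int c * x = x * (of_int c :: quat)"
  by (simp add: of_int_sc sc_comm)

context qp begin

lemma scal: assumes "hw u" "int p dvd (c - c')" shows "cng (of_int c * u) (of_int c' * u)"
proof -
  obtain t where t: "c - c' = int p * t" using assms(2) by blast
  have "of_int c * u - of_int c' * u = of_int (c - c') * u" by (simp add: algebra_simps)
  also have "\<dots> = of_nat p * (of_int t * u)" using t by (simp add: mult.assoc)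
  finally have e: "of_int c * u - of_int c' * u = of_nat p * (of_int t * u)" .
  have "hw (of_int t * u)" using hw_mult[OF hw_of_int assms(1)] .
  then have "pdvd p (of_nat p * (of_int t * u))" by (rule pdvd_p)
  then show ?thesis unfolding cng_def using e by simp
qed

lemma cancel: assumes "hw u" "\<not> int p dvd c" "cng (of_int c * u) 0" shows "cng u 0"
proof -
  obtain c' where c': "int p dvd (c * c' - 1)" using inv_mod[OF assms(2)] by blast
  have "cng (of_int c' * (of_int c * u)) (of_int c' * 0)" using cng_lmult[OF assms(3) hw_of_int] .
  moreover have "of_int c' * (of_int c * u) = of_int (c' * c) * u" by (simp add: mult.assoc)
  ultimately have a: "cng (of_int (c' * c) * u) 0" by simp
  have d1: "int p dvd (c' * c - 1)" using c' by (simp add: mult.commute)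
  have "cng (of_int (c' * c) * u) (of_int 1 * u)" by (rule scal[OF assms(1) d1])
  then have "cng u (of_int (c' * c) * u)" using cng_sym by simp
  then show ?thesis using a cng_trans by blast
qed

lemma eig:
  assumes pi: "hw \<pi>" "\<not> cng \<pi> 0" and w: "hw w" "w * w = -1"
    and c: "cng ((of_int c + of_int d * w) * \<pi>) 0" and nd: "\<not> (int p dvd c \<and> int p dvd d)"
  shows "\<exists>l. cng (w * \<pi>) (of_int l * \<pi>) \<and> \<not> int p dvd l"
proof -
  have hwp: "hw (w * \<pi>)" using pi w hw_mult by blast
  have ex: "(of_int c + of_int d * w) * \<pi> = of_int c * \<pi> + of_int d * (w * \<pi>)" by (simp add: algebra_simps mult.assoc)
  have ndd: "\<not> int p dvd d"
  proof
    assume dd: "int p dvd d"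
    then have nc: "\<not> int p dvd c" using nd by blast
    have "int p dvd (d - 0)" using dd by simp
    then have "cng (of_int d * (w * \<pi>)) (of_int 0 * (w * \<pi>))" by (rule scal[OF hwp])
    then have "cng (of_int d * (w * \<pi>)) 0" by simp
    then have "cng (of_int c * \<pi> + of_int d * (w * \<pi>)) (of_int c * \<pi> + 0)" by (rule cng_add[OF cng_refl])
    then have "cng (of_int c * \<pi>) (of_int c * \<pi> + of_int d * (w * \<pi>))" using cng_sym by simp
    moreover have "cng (of_int c * \<pi> + of_int d * (w * \<pi>)) 0" using c ex by simp
    ultimately have "cng (of_int c * \<pi>) 0" by (rule cng_trans)
    then have "cng \<pi> 0" using cancel[OF pi(1) nc] by blast
    then show False using pi(2) by blast
  qed
  obtain d' where d': "int p dvd (d * d' - 1)" using inv_mod[OF ndd] by blast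
  have "cng (of_int d' * ((of_int c + of_int d * w) * \<pi>)) (of_int d' * 0)" using cng_lmult[OF c hw_of_int] .
  moreover have "of_int d' * ((of_int c + of_int d * w) * \<pi>) = of_int (d' * c) * \<pi> + of_int (d' * d) * (w * \<pi>)"
    unfolding ex by (simp only: distrib_left of_int_mult mult.assoc)
  ultimately have a: "cng (of_int (d' * c) * \<pi> + of_int (d' * d) * (w * \<pi>)) 0" by simp
  have d1: "int p dvd (d' * d - 1)" using d' by (simp add: mult.commute)
  have b0: "cng (of_int (d' * d) * (w * \<pi>)) (of_int 1 * (w * \<pi>))" by (rule scal[OF hwp d1])
  then have b: "cng (of_int (d' * d) * (w * \<pi>)) (w * \<pi>)" by simp
  have "cng (of_int (d' * c) * \<pi> + of_int (d' * d) * (w * \<pi>)) (of_int (d' * c) * \<pi> + w * \<pi>)"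
    using cng_add[OF cng_refl b] by simp
  then have "cng (of_int (d' * c) * \<pi> + w * \<pi>) 0" using a cng_trans cng_sym by blast
  then have "cng (of_int (d' * c) * \<pi> + w * \<pi> - of_int (d' * c) * \<pi>) (0 - of_int (d' * c) * \<pi>)"
    using cng_diff cng_refl by blast
  then have ev: "cng (w * \<pi>) (of_int (- (d' * c)) * \<pi>)" by simp
  have "\<not> int p dvd (- (d' * c))"
  proof
    assume "int p dvd (- (d' * c))"
    then have "int p dvd (- (d' * c) - 0)" by simp
    then have "cng (of_int (- (d' * c)) * \<pi>) (of_int 0 * \<pi>)" by (rule scal[OF pi(1)])
    then have "cng (of_int (- (d' * c)) * \<pi>) 0" by simp
    then have "cng (w * \<pi>) 0" using ev by (rule cng_trans[rotated])
    then have "cng (w * (w * \<pi>)) (w * 0)" using cng_lmult w(1) by blast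
    then have "cng (- \<pi>) 0" using w(2) by (simp add: mult.assoc[symmetric])
    then have "pdvd p (- \<pi>)" by (simp add: cng_0_iff)
    then have "pdvd p (- (- \<pi>))" by (rule pdvd_uminus)
    then show False using pi(2) by (simp add: cng_0_iff)
  qed
  then show ?thesis using ev by blast
qed

lemma no_two:
  assumes pi: "hw \<pi>" "\<not> cng \<pi> 0"
    and l: "cng (ii * \<pi>) (of_int l * \<pi>)" "\<not> int p dvd l"
    and m: "cng (jj * \<pi>) (of_int m * \<pi>)" "\<not> int p dvd m"
  shows False
proof -
  have "cng (ii * (jj * \<pi>)) (ii * (of_int m * \<pi>))" using cng_lmult[OF m(1) hw_ii] .
  moreover have "ii * (of_int m * \<pi>) = of_int m * (ii * \<pi>)"
    by (simp only: mult.assoc[symmetric] of_int_comm[of m ii])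
  moreover have "cng (of_int m * (ii * \<pi>)) (of_int m * (of_int l * \<pi>))" using cng_lmult[OF l(1) hw_of_int] .
  ultimately have e1: "cng (ii * (jj * \<pi>)) (of_int (m * l) * \<pi>)" using cng_trans by (simp add: mult.assoc)
  have "cng (jj * (ii * \<pi>)) (jj * (of_int l * \<pi>))" using cng_lmult[OF l(1) hw_jj] .
  moreover have "jj * (of_int l * \<pi>) = of_int l * (jj * \<pi>)"
    by (simp only: mult.assoc[symmetric] of_int_comm[of l jj])
  moreover have "cng (of_int l * (jj * \<pi>)) (of_int l * (of_int m * \<pi>))" using cng_lmult[OF m(1) hw_of_int] .
  ultimately have e2: "cng (jj * (ii * \<pi>)) (of_int (l * m) * \<pi>)" using cng_trans by (simp add: mult.assoc)
  have "ii * (jj * \<pi>) + jj * (ii * \<pi>) = 0" using ii_jj(1) by (simp add: mult.assoc[symmetric] distrib_right[symmetric])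
  then have "cng 0 (of_int (m * l) * \<pi> + of_int (l * m) * \<pi>)" using cng_add[OF e1 e2] by simp
  moreover have "of_int (m * l) * \<pi> + of_int (l * m) * \<pi> = of_int (m * l + l * m) * \<pi>"
    by (simp only: of_int_add distrib_right)
  moreover have "m * l + l * m = 2 * l * m" by simp
  ultimately have "cng (of_int (2 * l * m) * \<pi>) 0" using cng_sym by simp
  moreover have "\<not> int p dvd 2 * l * m"
  proof
    assume "int p dvd 2 * l * m"
    then have "int p dvd 2 \<or> int p dvd l \<or> int p dvd m" using pdvd_mult by blast
    moreover have "\<not> int p dvd 2"
    proof
      assume "int p dvd 2" then have "int p \<le> 2" by (rule zdvd_imp_le) simp
      then show False using P_ge3 by simp
    qed
    ultimately show False using l(2) m(2) by blast
  qed
  ultimately have "cng \<pi> 0" using cancel[OF pi(1)] by blast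
  then show False using pi(2) by blast
qed

lemma card_Rs_ge: assumes pi: "\<pi> \<in> A p" shows "p ^ 2 \<le> card (Rs \<pi>)"
proof -
  have hp: "hw \<pi>" using A_hw[OF pi] .
  have np: "\<not> cng \<pi> 0" using A_not_pdvd[OF pi] cng_0_iff by blast
  define F where "F w = (\<lambda>(a, b). Phi \<pi> (rep (of_int a + of_int b * w)))" for w
  have Fsub: "F w ` (R \<times> R) \<subseteq> Rs \<pi>" if "hw w" for w
    unfolding F_def Rs_def using rep(1) hw_add hw_of_int hw_mult that by auto
  have Fval: "F w (a, b) = rep ((of_int a + of_int b * w) * \<pi>)" if "hw w" for w a b
  proof -
    have hu: "hw (of_int a + of_int b * w)" using that hw_add hw_of_int hw_mult by blast
    have "cng (rep (of_int a + of_int b * w) * \<pi>) ((of_int a + of_int b * w) * \<pi>)"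
      using cng_rmult[OF cng_sym[OF rep(2)[OF hu]] hp] .
    moreover have "hw (rep (of_int a + of_int b * w) * \<pi>)" using hw_mult[OF V_hw[OF rep(1)[OF hu]] hp] .
    moreover have "hw ((of_int a + of_int b * w) * \<pi>)" using hw_mult[OF hu hp] .
    ultimately show ?thesis unfolding F_def Phi_def using rep_eq by simp
  qed
  have notinj: "\<exists>l. cng (w * \<pi>) (of_int l * \<pi>) \<and> \<not> int p dvd l"
    if w: "hw w" "w * w = -1" and ni: "\<not> inj_on (F w) (R \<times> R)" for w
  proof -
    obtain a b a' b' where ab: "a \<in> R" "b \<in> R" "a' \<in> R" "b' \<in> R" "(a, b) \<noteq> (a', b')" "F w (a, b) = F w (a', b')"
      using ni unfolding inj_on_def by auto
    define u where "u = of_int a + of_int b * w"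
    define u' where "u' = of_int a' + of_int b' * w"
    have hu: "hw (u * \<pi>)" "hw (u' * \<pi>)" unfolding u_def u'_def using w hp by (simp_all add: hw_add hw_of_int hw_mult)
    have "rep (u * \<pi>) = rep (u' * \<pi>)" using ab(6) Fval[OF w(1)] unfolding u_def u'_def by simp
    then have "cng (u * \<pi>) (u' * \<pi>)" using cng_trans[OF rep(2)[OF hu(1)]] cng_sym[OF rep(2)[OF hu(2)]] by simp
    then have "cng (u * \<pi> - u' * \<pi>) (u' * \<pi> - u' * \<pi>)" using cng_diff cng_refl by blast
    moreover have "u * \<pi> - u' * \<pi> = (of_int (a - a') + of_int (b - b') * w) * \<pi>" unfolding u_def u'_def
      by (simp add: algebra_simps)
    ultimately have c: "cng ((of_int (a - a') + of_int (b - b') * w) * \<pi>) 0" by simp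
    have "\<not> (int p dvd (a - a') \<and> int p dvd (b - b'))" using R_eq ab by blast
    then show ?thesis using eig[OF hp np w c] by blast
  qed
  have "inj_on (F ii) (R \<times> R) \<or> inj_on (F jj) (R \<times> R)"
  proof (rule ccontr)
    assume "\<not> ?thesis"
    then obtain l m where "cng (ii * \<pi>) (of_int l * \<pi>)" "\<not> int p dvd l" "cng (jj * \<pi>) (of_int m * \<pi>)" "\<not> int p dvd m"
      using notinj[OF hw_ii ii_jj(2)] notinj[OF hw_jj ii_jj(3)] by blast
    then show False using no_two[OF hp np] by blast
  qed
  then obtain w where w: "hw w" "inj_on (F w) (R \<times> R)" using hw_ii hw_jj by blast
  have finRs: "finite (Rs \<pi>)" using Rs_sub[OF hp] finite_V finite_subset by blast
  have "card (R \<times> R) = card (F w ` (R \<times> R))" using card_image[OF w(2)] by simp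
  also have "\<dots> \<le> card (Rs \<pi>)" by (rule card_mono[OF finRs Fsub[OF w(1)]])
  finally show ?thesis using cardR by (simp add: card_cartesian_product power2_eq_square)
qed

lemma card_Rs: assumes pi: "\<pi> \<in> A p" shows "card (Rs \<pi>) = p ^ 2"
proof -
  define q where "q = p ^ 2"
  have pc: "qcnj \<pi> \<in> A p" using A_cnj[OF pi] .
  have g1: "q \<le> card (Rs \<pi>)" unfolding q_def using card_Rs_ge[OF pi] .
  have g2: "q \<le> card (Rs (qcnj \<pi>))" unfolding q_def using card_Rs_ge[OF pc] .
  have finK: "finite (ker \<pi>)" unfolding ker_def using finite_V by simp
  have g3: "card (Rs (qcnj \<pi>)) \<le> card (ker \<pi>)" using card_mono[OF finK Rs_cnj_ker[OF pi]] .
  have p4: "p ^ 4 = q * q" unfolding q_def by (simp add: power4_eq_xxxx power2_eq_square mult.assoc)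
  have e: "q * q = card (Rs \<pi>) * card (ker \<pi>)" using card_Rs_ker[OF A_hw[OF pi]] card_V p4 by simp
  have "card (Rs \<pi>) * q \<le> card (Rs \<pi>) * card (ker \<pi>)" using g2 g3 by (simp add: mult_le_mono2)
  then have le: "card (Rs \<pi>) * q \<le> q * q" using e by simp
  have q0: "0 < q" unfolding q_def using p_pos by simp
  have "card (Rs \<pi>) \<le> q" using le q0 mult_le_cancel2[of "card (Rs \<pi>)" q q] by blast
  then show ?thesis using g1 unfolding q_def by simp
qed

end

lemma card_filter_sum: "finite Y \<Longrightarrow> card {b \<in> Y. P b} = (\<Sum>b\<in>Y. if P b then 1 else 0)"
  using sum.inter_filter[of Y "\<lambda>_. (1::nat)" P] by simp

lemma double_count:
  assumes "finite X" "finite Y"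
  shows "(\<Sum>a\<in>X. card {b \<in> Y. r a b}) = (\<Sum>b\<in>Y. card {a \<in> X. r a b})"
proof -
  have "(\<Sum>a\<in>X. card {b \<in> Y. r a b}) = (\<Sum>a\<in>X. \<Sum>b\<in>Y. if r a b then 1 else 0)"
    using card_filter_sum[OF assms(2)] by simp
  also have "\<dots> = (\<Sum>b\<in>Y. \<Sum>a\<in>X. if r a b then 1 else 0)" by (rule sum.swap)
  also have "\<dots> = (\<Sum>b\<in>Y. card {a \<in> X. r a b})"
    using card_filter_sum[OF assms(1)] by simp
  finally show ?thesis .
qed

context qp begin

lemma zero_Rs: "0 \<in> Rs \<pi>"
proof -
  have "Phi \<pi> 0 = 0" unfolding Phi_def using rep_V[OF zero_V] by simp
  then show ?thesis unfolding Rs_def using zero_V by (metis image_eqI)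
qed

lemma inrm_toQ: "inrm (toQ (a, b, c, d)) = a^2 + b^2 + c^2 + d^2"
proof -
  have "nrm (toQ (a, b, c, d)) = of_int (a^2 + b^2 + c^2 + d^2)" unfolding toQ_def nrm_def by simp
  then have "inrm (toQ (a, b, c, d)) = \<lfloor>(of_int (a^2 + b^2 + c^2 + d^2) :: rat)\<rfloor>" by (simp only: inrm_def)
  then show ?thesis by (simp only: floor_of_int)
qed

lemma iso_set: "{x \<in> V. int p dvd inrm x} = toQ ` Q0set"
proof (intro equalityI subsetI)
  fix x assume "x \<in> {x \<in> V. int p dvd inrm x}"
  then obtain a b c d where "x = toQ (a, b, c, d)" "a \<in> R" "b \<in> R" "c \<in> R" "d \<in> R" "int p dvd inrm x"
    unfolding V_def by auto
  then show "x \<in> toQ ` Q0set" unfolding Q0set_def using inrm_toQ by auto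
next
  fix x assume "x \<in> toQ ` Q0set"
  then obtain a b c d where "x = toQ (a, b, c, d)" "a \<in> R" "b \<in> R" "c \<in> R" "d \<in> R" "int p dvd (a^2 + b^2 + c^2 + d^2)"
    unfolding Q0set_def by auto
  then show "x \<in> {x \<in> V. int p dvd inrm x}" unfolding V_def using inrm_toQ by auto
qed

lemma count_x:
  assumes x: "x \<in> V" "x \<noteq> 0"
  shows "card {\<pi> \<in> A p. x \<in> Rs \<pi>} = (if int p dvd inrm x then card (A 1) else 0)"
proof -
  have "{\<pi> \<in> A p. x \<in> Rs \<pi>} = {\<pi> \<in> A p. rdvd \<pi> x}" using Rs_iff x(1) by blast
  moreover have "card {\<pi> \<in> A p. rdvd \<pi> x} = (if int p dvd inrm x then card (A 1) else 0)"
  proof (cases "int p dvd inrm x")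
    case True
    then show ?thesis using divset_notp[OF pp V_hw[OF x(1)] True V_not_pdvd[OF x]] by simp
  next
    case False
    have "{\<pi> \<in> A p. rdvd \<pi> x} = {}"
    proof (rule ccontr)
      assume "{\<pi> \<in> A p. rdvd \<pi> x} \<noteq> {}"
      then obtain \<pi> s where pi: "\<pi> \<in> A p" "hw s" "x = s * \<pi>" unfolding rdvd_def by blast
      have "inrm x = inrm s * inrm \<pi>" using inrm_mult[OF pi(2) A_hw[OF pi(1)]] pi(3) by simp
      moreover have "(of_int (inrm \<pi>) :: rat) = of_int (int p)" using inrm[OF A_hw[OF pi(1)]] pi(1) unfolding A_def
        by simp
      then have "inrm \<pi> = int p" by (simp only: of_int_eq_iff)
      ultimately have "int p dvd inrm x" by simp
      then show False using False by blast
    qed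
    then show ?thesis using False by (metis card.empty)
  qed
  ultimately show ?thesis by simp
qed

theorem F1: "card (A p) = card (A 1) * (p + 1)"
proof -
  define Y where "Y = V - {0}"
  have finY: "finite Y" unfolding Y_def using finite_V by simp
  have lhs: "(\<Sum>\<pi>\<in>A p. card {x \<in> Y. x \<in> Rs \<pi>}) = card (A p) * (p^2 - 1)"
  proof -
    have "card {x \<in> Y. x \<in> Rs \<pi>} = p^2 - 1" if pi: "\<pi> \<in> A p" for \<pi>
    proof -
      have "{x \<in> Y. x \<in> Rs \<pi>} = Rs \<pi> - {0}" unfolding Y_def using Rs_sub[OF A_hw[OF pi]] by blast
      moreover have "finite (Rs \<pi>)" using Rs_sub[OF A_hw[OF pi]] finite_V finite_subset by blast
      ultimately show ?thesis using card_Rs[OF pi] zero_Rs by simp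
    qed
    then show ?thesis by simp
  qed
  have rhs: "(\<Sum>x\<in>Y. card {\<pi> \<in> A p. x \<in> Rs \<pi>}) = card (A 1) * card {x \<in> Y. int p dvd inrm x}"
  proof -
    have "(\<Sum>x\<in>Y. card {\<pi> \<in> A p. x \<in> Rs \<pi>}) = (\<Sum>x\<in>Y. if int p dvd inrm x then card (A 1) else 0)"
      using count_x unfolding Y_def by (intro sum.cong) auto
    also have "\<dots> = (\<Sum>x\<in>{x \<in> Y. int p dvd inrm x}. card (A 1))"
      using sum.inter_filter[OF finY, of "\<lambda>_. card (A 1)" "\<lambda>x. int p dvd inrm x"] by simp
    finally show ?thesis by simp
  qed
  have z0: "0 \<in> {x \<in> V. int p dvd inrm x}" using zero_V by (simp add: inrm_def nrm_def)
  have finI: "finite (toQ ` Q0set)" using iso_set finite_V by (metis finite_subset mem_Collect_eq subsetI)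
  have cI: "card (toQ ` Q0set) = card Q0set" by (rule card_image) (rule inj_on_subset[OF toQ_inj], simp)
  have cY: "card {x \<in> Y. int p dvd inrm x} = card Q0set - 1"
  proof -
    have "{x \<in> Y. int p dvd inrm x} = toQ ` Q0set - {0}" unfolding Y_def using iso_set by blast
    moreover have "0 \<in> toQ ` Q0set" using iso_set z0 by simp
    ultimately show ?thesis using cI finI by simp
  qed
  have main: "card (A p) * (p^2 - 1) = card (A 1) * (card Q0set - 1)"
    using double_count[OF finite_A finY, of "\<lambda>\<pi> x. x \<in> Rs \<pi>"] lhs rhs cY by simp
  have q0: "int (card Q0set) = int p ^ 3 + int p ^ 2 - int p" using Q0_card by simp
  have p1: "p \<ge> 3" using P_ge3 by simp
  have c1: "card Q0set \<ge> 1"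
  proof -
    have "toQ ` Q0set \<noteq> {}" using iso_set z0 by auto
    then have "card (toQ ` Q0set) > 0" using finI by (simp add: card_gt_0_iff)
    then show ?thesis using cI by simp
  qed
  have "int (card Q0set - 1) = (int p + 1) * (int p ^ 2 - 1)"
  proof -
    have "int (card Q0set - 1) = int (card Q0set) - 1" using c1 by simp
    then show ?thesis using q0 by (simp add: power2_eq_square power3_eq_cube algebra_simps)
  qed
  moreover have "int (p^2 - 1) = int p ^ 2 - 1" using p1 by (simp add: of_nat_diff)
  ultimately have "int (card (A p)) * (int p ^ 2 - 1) = (int (card (A 1)) * (int p + 1)) * (int p ^ 2 - 1)"
    using arg_cong[OF main, of int] by (simp only: of_nat_mult mult.assoc)
  moreover have "int p ^ 2 - 1 \<noteq> 0"
  proof -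
    have "int p ^ 2 \<ge> 3 ^ 2" using p1 by (intro power_mono) auto
    then show ?thesis by simp
  qed
  ultimately have "int (card (A p)) = int (card (A 1)) * (int p + 1)" using mult_right_cancel by blast
  also have "\<dots> = int (card (A 1) * (p + 1))" by (simp add: algebra_simps)
  finally show ?thesis by (simp only: of_nat_eq_iff)
qed

end

lemma one_A1: "1 \<in> A 1" unfolding A_def by simp

theorem A_sigma_odd: "odd n \<Longrightarrow> card (A n) = card (A 1) * sigma n"
proof (rule A_sigma)
  fix p :: nat assume "prime p" "odd p"
  then interpret qp p by unfold_locales
  show "card (A p) = card (A 1) * (p + 1)" by (rule F1)
next
  show "card (A 1) > 0" using one_A1 finite_A card_gt_0_iff by blast
qed

definition e2 :: quat where "e2 = om - 1"

lemma int_half: "even k \<Longrightarrow> (of_int k / 2 :: rat) \<in> \<int>"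
  by (elim evenE) simp

lemma lp_odd_norm:
  assumes "lp q" "odd (inrm q)"
  shows "\<not> lp (om * q)" "\<not> lp (e2 * q)"
proof -
  obtain a b c d where q: "re q = of_int a" "qi q = of_int b" "qj q = of_int c" "qk q = of_int d"
    using assms(1) unfolding lp_def by (auto elim!: Ints_cases)
  have "inrm q = a^2 + b^2 + c^2 + d^2"
  proof -
    have "nrm q = of_int (a^2 + b^2 + c^2 + d^2)" unfolding nrm_def q by simp
    then have "inrm q = \<lfloor>(of_int (a^2 + b^2 + c^2 + d^2) :: rat)\<rfloor>" by (simp only: inrm_def)
    then show ?thesis by (simp only: floor_of_int)
  qed
  then have "odd (a^2 + b^2 + c^2 + d^2)" using assms(2) by simp
  moreover have "a^2 + b^2 + c^2 + d^2 - (a + b + c + d) = a*(a-1) + b*(b-1) + c*(c-1) + d*(d-1)"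
    by (simp add: power2_eq_square algebra_simps)
  moreover have "even (a*(a-1))" "even (b*(b-1))" "even (c*(c-1))" "even (d*(d-1))" by simp_all
  ultimately have "odd (a + b + c + d)" by presburger
  then have od: "odd (a - b - c - d)" "odd (- a - b - c - d)" by presburger+
  have "re (om * q) = of_int (a - b - c - d) / 2" by (simp add: q field_simps)
  moreover have "\<not> (of_int (a - b - c - d) / 2 :: rat) \<in> \<int>"
  proof
    assume "(of_int (a - b - c - d) / 2 :: rat) \<in> \<int>"
    then obtain k where "(of_int (a - b - c - d) / 2 :: rat) = of_int k" by (auto elim!: Ints_cases)
    then have "a - b - c - d = 2 * k" by (simp add: field_simps)
    then show False using od(1) by simp
  qed
  ultimately have "re (om * q) \<notin> \<int>" by metis
  then show "\<not> lp (om * q)" unfolding lp_def by blast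
  have "re (e2 * q) = of_int (- a - b - c - d) / 2" by (simp add: e2_def q field_simps)
  moreover have "\<not> (of_int (- a - b - c - d) / 2 :: rat) \<in> \<int>"
  proof
    assume "(of_int (- a - b - c - d) / 2 :: rat) \<in> \<int>"
    then obtain k where "(of_int (- a - b - c - d) / 2 :: rat) = of_int k" by (auto elim!: Ints_cases)
    then have "- a - b - c - d = 2 * k" by (simp add: field_simps)
    then show False using od(2) by simp
  qed
  ultimately have "re (e2 * q) \<notin> \<int>" by metis
  then show "\<not> lp (e2 * q)" unfolding lp_def by blast
qed

lemma half_cases:
  assumes "hw q" "\<not> lp q"
  shows "lp (om * q) \<or> lp (e2 * q)"
proof -
  have "lp (q - om)" using assms unfolding hw_def by blast
  then obtain a b c d where q: "re q = of_int a + 1/2" "qi q = of_int b + 1/2" "qj q = of_int c + 1/2" "qk q = of_int d + 1/2"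
    unfolding lp_def by (auto elim!: Ints_cases simp: algebra_simps)
  have o1: "re (om * q) = of_int (a - b - c - d - 1) / 2" "qi (om * q) = of_int (a + b - c + d + 1) / 2"
    "qj (om * q) = of_int (a + b + c - d + 1) / 2" "qk (om * q) = of_int (a - b + c + d + 1) / 2"
    by (simp_all add: q field_simps)
  have o2: "re (e2 * q) = of_int (- a - b - c - d - 2) / 2" "qi (e2 * q) = of_int (a - b - c + d) / 2"
    "qj (e2 * q) = of_int (a + b - c - d) / 2" "qk (e2 * q) = of_int (a - b + c - d) / 2"
    by (simp_all add: e2_def q field_simps)
  show ?thesis
  proof (cases "even (a + b + c + d)")
    case True
    then have "even (- a - b - c - d - 2)" "even (a - b - c + d)" "even (a + b - c - d)" "even (a - b + c - d)"
      by presburger+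
    then have "lp (e2 * q)" unfolding lp_def o2 using int_half by blast
    then show ?thesis by blast
  next
    case False
    then have "even (a - b - c - d - 1)" "even (a + b - c + d + 1)" "even (a + b + c - d + 1)" "even (a - b + c + d + 1)"
      by presburger+
    then have "lp (om * q)" unfolding lp_def o1 using int_half by blast
    then show ?thesis by blast
  qed
qed

lemma unit_om: "om * qcnj om = 1" "qcnj om * om = 1"
  by (auto intro!: quat_eqI)
lemma unit_e2: "e2 * qcnj e2 = 1" "qcnj e2 * e2 = 1"
  by (auto intro!: quat_eqI simp: e2_def)
lemma hw_e2: "hw e2" unfolding e2_def using hw_om hw_diff hw_1 by blast
lemma nrm_om: "nrm om = 1" and nrm_e2: "nrm e2 = 1" by (auto simp: nrm_def e2_def power2_eq_square)

definition Lip where "Lip n = {q \<in> A n. lp q}"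
definition Half where "Half n = {q \<in> A n. \<not> lp q}"

lemma unit_bij:
  assumes u: "hw u" "nrm u = 1" "u * qcnj u = 1" "qcnj u * u = 1"
    and S: "\<And>q. q \<in> S \<Longrightarrow> q \<in> A n \<and> lp (u * q)"
    and T: "\<And>v. v \<in> Lip n \<Longrightarrow> qcnj u * v \<in> S"
  shows "card S = card (Lip n)"
proof -
  have "bij_betw (\<lambda>q. u * q) S (Lip n)"
  proof (rule bij_betw_byWitness[where f' = "\<lambda>v. qcnj u * v"])
    show "\<forall>a\<in>S. qcnj u * (u * a) = a" using u(4) by (simp add: mult.assoc[symmetric])
    show "\<forall>a'\<in>Lip n. u * (qcnj u * a') = a'" using u(3) by (simp add: mult.assoc[symmetric])
    show "(\<lambda>q. u * q) ` S \<subseteq> Lip n"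
    proof
      fix x assume "x \<in> (\<lambda>q. u * q) ` S"
      then obtain q where "q \<in> S" "x = u * q" by blast
      then show "x \<in> Lip n" using S[of q] u unfolding Lip_def A_def by (auto simp: hw_mult nrm_mult)
    qed
    show "(\<lambda>v. qcnj u * v) ` Lip n \<subseteq> S" using T by blast
  qed
  then show ?thesis by (rule bij_betw_same_card)
qed

lemma Half_Lip:
  assumes n: "odd n"
  shows "card (Half n) = 2 * card (Lip n)"
proof -
  define L1 where "L1 = {q \<in> A n. \<not> lp q \<and> lp (om * q)}"
  define L2 where "L2 = {q \<in> A n. \<not> lp q \<and> \<not> lp (om * q)}"
  have oddn: "odd (inrm q)" if "q \<in> A n" for q
  proof -
    have "of_int (inrm q) = (of_int (int n) :: rat)" using that inrm[of q] unfolding A_def by auto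
    then have "inrm q = int n" by (simp only: of_int_eq_iff)
    then show ?thesis using n by simp
  qed
  have H: "Half n = L1 \<union> L2" unfolding Half_def L1_def L2_def by blast
  have D: "L1 \<inter> L2 = {}" unfolding L1_def L2_def by blast
  have fin: "finite L1" "finite L2" unfolding L1_def L2_def using finite_A by auto
  have c1: "card L1 = card (Lip n)"
  proof (rule unit_bij[OF hw_om nrm_om unit_om])
    show "q \<in> A n \<and> lp (om * q)" if "q \<in> L1" for q using that unfolding L1_def by blast
    show "qcnj om * v \<in> L1" if v: "v \<in> Lip n" for v
    proof -
      have vA: "v \<in> A n" "lp v" using v unfolding Lip_def by auto
      have w: "qcnj om * v \<in> A n" using vA(1) unfolding A_def by (auto simp: hw_mult hw_cnj hw_om nrm_mult nrm_om)
      have "om * (qcnj om * v) = v" using unit_om by (simp add: mult.assoc[symmetric])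
      moreover have "\<not> lp (qcnj om * v)"
        using lp_odd_norm(1)[of "qcnj om * v"] oddn[OF w] \<open>om * (qcnj om * v) = v\<close> vA(2) by auto
      ultimately show ?thesis using w vA unfolding L1_def by auto
    qed
  qed
  have c2: "card L2 = card (Lip n)"
  proof (rule unit_bij[OF hw_e2 nrm_e2 unit_e2])
    show "q \<in> A n \<and> lp (e2 * q)" if "q \<in> L2" for q
      using that half_cases unfolding L2_def A_def by blast
    show "qcnj e2 * v \<in> L2" if v: "v \<in> Lip n" for v
    proof -
      have vA: "v \<in> A n" "lp v" using v unfolding Lip_def by auto
      have w: "qcnj e2 * v \<in> A n" using vA(1) unfolding A_def by (auto simp: hw_mult hw_cnj hw_e2 nrm_mult nrm_e2)
      have ev: "e2 * (qcnj e2 * v) = v" using unit_e2 by (simp add: mult.assoc[symmetric])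
      have nl: "\<not> lp (qcnj e2 * v)" using lp_odd_norm(2)[of "qcnj e2 * v"] oddn[OF w] ev vA(2) by auto
      have "\<not> lp (om * (qcnj e2 * v))"
      proof
        assume "lp (om * (qcnj e2 * v))"
        then have "lp (om * (qcnj e2 * v) - e2 * (qcnj e2 * v))" using ev vA(2) lp_diff by simp
        moreover have "om * (qcnj e2 * v) - e2 * (qcnj e2 * v) = qcnj e2 * v"
          by (simp add: e2_def algebra_simps)
        ultimately show False using nl by simp
      qed
      then show ?thesis using w nl unfolding L2_def by auto
    qed
  qed
  show ?thesis using H D fin c1 c2 by (simp add: card_Un_disjoint)
qed

lemma A_Lip_Half: "card (A n) = card (Lip n) + card (Half n)"
proof -
  have "A n = Lip n \<union> Half n" "Lip n \<inter> Half n = {}" unfolding Lip_def Half_def by auto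
  moreover have "finite (Lip n)" "finite (Half n)" unfolding Lip_def Half_def using finite_A by auto
  ultimately show ?thesis by (simp add: card_Un_disjoint)
qed


definition S4 :: "nat \<Rightarrow> (int \<times> int \<times> int \<times> int) set" where
  "S4 n = {(a, b, c, d). a^2 + b^2 + c^2 + d^2 = int n}"
definition O4 :: "nat \<Rightarrow> (int \<times> int \<times> int \<times> int) set" where
  "O4 n = {(a, b, c, d). odd a \<and> odd b \<and> odd c \<and> odd d \<and> a^2 + b^2 + c^2 + d^2 = 4 * int n}"

definition tq :: "int \<times> int \<times> int \<times> int \<Rightarrow> quat" where
  "tq = (\<lambda>(a, b, c, d). Q (of_int a) (of_int b) (of_int c) (of_int d))"
definition hq :: "int \<times> int \<times> int \<times> int \<Rightarrow> quat" where
  "hq = (\<lambda>(a, b, c, d). Q (of_int a / 2) (of_int b / 2) (of_int c / 2) (of_int d / 2))"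

lemma tq_inj: "inj tq" unfolding tq_def by (auto intro!: injI)
lemma hq_inj: "inj hq" unfolding hq_def by (auto intro!: injI)

lemma nrm_eq_int: "nrm q = of_int k \<Longrightarrow> nrm q = of_nat n \<longleftrightarrow> k = int n"
  by (metis of_int_eq_iff of_int_of_nat_eq)

lemma Lip_S4: "Lip n = tq ` S4 n"
proof (intro equalityI subsetI)
  fix q assume "q \<in> Lip n"
  then have q: "lp q" "nrm q = of_nat n" unfolding Lip_def A_def by auto
  obtain a b c d where abcd: "re q = of_int a" "qi q = of_int b" "qj q = of_int c" "qk q = of_int d"
    using q(1) unfolding lp_def by (auto elim!: Ints_cases)
  have "nrm q = of_int (a^2 + b^2 + c^2 + d^2)" unfolding nrm_def abcd by simp
  then have "a^2 + b^2 + c^2 + d^2 = int n" using q(2) nrm_eq_int by blast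
  moreover have "q = tq (a, b, c, d)" unfolding tq_def using abcd by (auto intro: quat_eqI)
  ultimately show "q \<in> tq ` S4 n" unfolding S4_def by blast
next
  fix q assume "q \<in> tq ` S4 n"
  then obtain a b c d where abcd: "q = tq (a, b, c, d)" "a^2 + b^2 + c^2 + d^2 = int n" unfolding S4_def by auto
  have l: "lp q" unfolding abcd(1) tq_def lp_def by simp
  have "nrm q = of_int (a^2 + b^2 + c^2 + d^2)" unfolding abcd(1) tq_def nrm_def by simp
  then have "nrm q = of_nat n" using abcd(2) by (metis of_int_of_nat_eq)
  then show "q \<in> Lip n" unfolding Lip_def A_def using l lp_hw by simp
qed

lemma odd_half_notin: "odd k \<Longrightarrow> (of_int k / 2 :: rat) \<notin> \<int>"
proof
  assume "odd k" "(of_int k / 2 :: rat) \<in> \<int>"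
  then obtain j where "(of_int k / 2 :: rat) = of_int j" by (auto elim!: Ints_cases)
  then have "k = 2 * j" by (simp add: field_simps)
  then show False using \<open>odd k\<close> by simp
qed

lemma Half_O4: "Half n = hq ` O4 n"
proof (intro equalityI subsetI)
  fix q assume "q \<in> Half n"
  then have q: "hw q" "\<not> lp q" "nrm q = of_nat n" unfolding Half_def A_def by auto
  then have "lp (q - om)" unfolding hw_def by blast
  then obtain a b c d where abcd: "re q - 1/2 = of_int a" "qi q - 1/2 = of_int b" "qj q - 1/2 = of_int c" "qk q - 1/2 = of_int d"
    unfolding lp_def by (auto elim!: Ints_cases)
  have e: "re q = of_int (2*a+1) / 2" "qi q = of_int (2*b+1) / 2" "qj q = of_int (2*c+1) / 2" "qk q = of_int (2*d+1) / 2"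
    using abcd by (simp_all add: field_simps)
  have "4 * nrm q = of_int ((2*a+1)^2 + (2*b+1)^2 + (2*c+1)^2 + (2*d+1)^2)"
    unfolding nrm_def e by (simp add: power2_eq_square field_simps)
  then have "(of_int ((2*a+1)^2 + (2*b+1)^2 + (2*c+1)^2 + (2*d+1)^2) :: rat) = of_int (4 * int n)"
    using q(3) by simp
  then have "(2*a+1)^2 + (2*b+1)^2 + (2*c+1)^2 + (2*d+1)^2 = 4 * int n" by (simp only: of_int_eq_iff)
  moreover have "q = hq (2*a+1, 2*b+1, 2*c+1, 2*d+1)" unfolding hq_def using e by (auto intro: quat_eqI)
  ultimately show "q \<in> hq ` O4 n" unfolding O4_def by auto
next
  fix q assume "q \<in> hq ` O4 n"
  then obtain a b c d where abcd: "q = hq (a, b, c, d)" "odd a" "odd b" "odd c" "odd d" "a^2 + b^2 + c^2 + d^2 = 4 * int n"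
    unfolding O4_def by auto
  have r: "re (q - om) = of_int (a - 1) / 2" "qi (q - om) = of_int (b - 1) / 2" "qj (q - om) = of_int (c - 1) / 2" "qk (q - om) = of_int (d - 1) / 2"
    unfolding abcd(1) hq_def by (simp_all add: field_simps)
  have ev: "even (a - 1)" "even (b - 1)" "even (c - 1)" "even (d - 1)" using abcd by simp_all
  have "re (q - om) \<in> \<int>" "qi (q - om) \<in> \<int>" "qj (q - om) \<in> \<int>" "qk (q - om) \<in> \<int>"
    unfolding r using int_half ev by blast+
  then have "lp (q - om)" unfolding lp_def by blast
  then have "hw q" unfolding hw_def by blast
  moreover have "\<not> lp q" unfolding lp_def abcd(1) hq_def using odd_half_notin abcd(2) by simp
  moreover have "4 * nrm q = of_int (a^2 + b^2 + c^2 + d^2)" unfolding abcd(1) hq_def nrm_def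
    by (simp add: power2_eq_square field_simps)
  then have "nrm q = of_nat n" using abcd(6) by simp
  ultimately show "q \<in> Half n" unfolding Half_def A_def by simp
qed

lemma card_S4: "card (S4 n) = card (Lip n)"
  unfolding Lip_S4 by (rule card_image[symmetric]) (rule inj_on_subset[OF tq_inj], simp)
lemma card_O4: "card (O4 n) = card (Half n)"
  unfolding Half_O4 by (rule card_image[symmetric]) (rule inj_on_subset[OF hq_inj], simp)

lemma sq1: fixes x :: int assumes "x^2 \<le> 1" shows "x = -1 \<or> x = 0 \<or> x = 1"
proof -
  have "\<bar>x\<bar> \<le> 1"
  proof (rule ccontr)
    assume "\<not> \<bar>x\<bar> \<le> 1"
    then have "\<bar>x\<bar> \<ge> 2" by simp
    then have "\<bar>x\<bar> * \<bar>x\<bar> \<ge> 2 * 2" by (intro mult_mono) auto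
    then show False using assms by (simp add: power2_eq_square)
  qed
  then show ?thesis by auto
qed

lemma S4_1: "S4 1 = {(1,0,0,0), (-1,0,0,0), (0,1,0,0), (0,-1,0,0), (0,0,1,0), (0,0,-1,0), (0,0,0,1), (0,0,0,-1)}"
proof (intro equalityI subsetI)
  fix x assume "x \<in> S4 1"
  then obtain a b c d where x: "x = (a, b, c, d)" "a^2 + b^2 + c^2 + d^2 = 1" unfolding S4_def by auto
  have nn: "a^2 \<ge> 0" "b^2 \<ge> 0" "c^2 \<ge> 0" "d^2 \<ge> 0" by simp_all
  have "a^2 \<le> 1" "b^2 \<le> 1" "c^2 \<le> 1" "d^2 \<le> 1" using x(2) nn by linarith+
  then have v: "a = -1 \<or> a = 0 \<or> a = 1" "b = -1 \<or> b = 0 \<or> b = 1" "c = -1 \<or> c = 0 \<or> c = 1" "d = -1 \<or> d = 0 \<or> d = 1"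
    using sq1 by blast+
  have "(a, b, c, d) \<in> {(1,0,0,0), (-1,0,0,0), (0,1,0,0), (0,-1,0,0), (0,0,1,0), (0,0,-1,0), (0,0,0,1), (0,0,0,-1)}"
    by (insert v x(2), elim disjE, simp_all)
  then show "x \<in> {(1,0,0,0), (-1,0,0,0), (0,1,0,0), (0,-1,0,0), (0,0,1,0), (0,0,-1,0), (0,0,0,1), (0,0,0,-1)}"
    using x(1) by simp
qed (auto simp: S4_def)

lemma card_S4_1: "card (S4 1) = 8" unfolding S4_1 by simp

theorem counts:
  assumes "odd m"
  shows "card (S4 m) = 8 * sigma m" "card (O4 m) = 16 * sigma m"
proof -
  have c1: "card (A 1) = 24"
    using A_Lip_Half[of 1] Half_Lip[of 1] card_S4[of 1] card_S4_1 by simp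
  have "card (A m) = 24 * sigma m" using A_sigma_odd[OF assms] c1 by simp
  then have "3 * card (Lip m) = 24 * sigma m" using A_Lip_Half[of m] Half_Lip[OF assms] by simp
  then have L: "card (Lip m) = 8 * sigma m" by simp
  then show "card (S4 m) = 8 * sigma m" using card_S4 by simp
  show "card (O4 m) = 16 * sigma m" using card_O4 Half_Lip[OF assms] L by simp
qed


lemma sq_par: "even ((a::int)^2 + b^2 + c^2 + d^2) \<longleftrightarrow> even (a + b + c + d)"
proof -
  have "a^2 + b^2 + c^2 + d^2 - (a + b + c + d) = a*(a-1) + b*(b-1) + c*(c-1) + d*(d-1)"
    by (simp add: power2_eq_square algebra_simps)
  moreover have "even (a*(a-1))" "even (b*(b-1))" "even (c*(c-1))" "even (d*(d-1))" by simp_all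
  ultimately show ?thesis by presburger
qed

lemma div2: "even (k::int) \<Longrightarrow> 2 * (k div 2) = k" by simp

theorem part1:
  fixes m :: nat assumes "odd m"
  shows "card {(x::int, y::int, z::int, w::int).
            x^2 + y^2 + 2*z^2 + 2*w^2 = 4 * int m \<and> even x \<and> even y \<and> odd z \<and> odd w} = 4 * sigma m"
proof -
  define S1 where "S1 = {(x::int, y::int, z::int, w::int).
            x^2 + y^2 + 2*z^2 + 2*w^2 = 4 * int m \<and> even x \<and> even y \<and> odd z \<and> odd w}"
  define T1 where "T1 = {(a, b, c, d) \<in> S4 m. odd (c + d)}"
  define T2 where "T2 = {(a, b, c, d) \<in> S4 m. odd (a + b)}"
  have par: "odd (a + b + c + d)" if "(a, b, c, d) \<in> S4 m" for a b c d
    using that assms sq_par[of a b c d] unfolding S4_def by simp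
  have U: "S4 m = T1 \<union> T2" unfolding T1_def T2_def using par by (auto; presburger)
  have D: "T1 \<inter> T2 = {}" unfolding T1_def T2_def using par by (auto; presburger)
  have "finite (Lip m)" unfolding Lip_def using finite_A by simp
  then have "finite (tq ` S4 m)" unfolding Lip_S4 .
  then have finS4: "finite (S4 m)" using finite_imageD inj_on_subset[OF tq_inj] by blast
  have fin: "finite T1" "finite T2" using finS4 unfolding T1_def T2_def by (auto intro: finite_subset)
  have sw: "bij_betw (\<lambda>(a, b, c, d). (c, d, a, b)) T1 T2"
  proof (rule bij_betw_byWitness[where f' = "\<lambda>(a, b, c, d). (c, d, a, b)"])
    have e: "c^2 + d^2 + a^2 + b^2 = a^2 + b^2 + c^2 + d^2" for a b c d :: int by simp
    show "(\<lambda>(a, b, c, d). (c, d, a, b)) ` T1 \<subseteq> T2" unfolding T1_def T2_def S4_def using e by auto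
    show "(\<lambda>(a, b, c, d). (c, d, a, b)) ` T2 \<subseteq> T1" unfolding T1_def T2_def S4_def using e by auto
  qed auto
  have "card (S4 m) = card T1 + card T2" using U D fin by (simp add: card_Un_disjoint)
  also have "card T2 = card T1" using bij_betw_same_card[OF sw] by simp
  finally have cT1: "card T1 = 4 * sigma m" using counts(1)[OF assms] by simp
  have "bij_betw (\<lambda>(x, y, z, w). (x div 2, y div 2, (z + w) div 2, (z - w) div 2)) S1 T1"
  proof (rule bij_betw_byWitness[where f' = "\<lambda>(a, b, c, d). (2 * a, 2 * b, c + d, c - d)"])
    show "\<forall>s\<in>S1. (\<lambda>(a, b, c, d). (2 * a, 2 * b, c + d, c - d)) ((\<lambda>(x, y, z, w). (x div 2, y div 2, (z + w) div 2, (z - w) div 2)) s) = s"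
    proof
      fix s assume "s \<in> S1"
      then obtain x y z w where s: "s = (x, y, z, w)" "even x" "even y" "odd z" "odd w" unfolding S1_def by auto
      have "even (z + w)" "even (z - w)" using s by auto
      then have "2 * ((z + w) div 2) = z + w" "2 * ((z - w) div 2) = z - w" by (simp_all add: div2)
      then have "(z + w) div 2 + (z - w) div 2 = z" "(z + w) div 2 - (z - w) div 2 = w" by linarith+
      then show "(\<lambda>(a, b, c, d). (2 * a, 2 * b, c + d, c - d)) ((\<lambda>(x, y, z, w). (x div 2, y div 2, (z + w) div 2, (z - w) div 2)) s) = s"
        using s by simp
    qed
    show "\<forall>t\<in>T1. (\<lambda>(x, y, z, w). (x div 2, y div 2, (z + w) div 2, (z - w) div 2)) ((\<lambda>(a, b, c, d). (2 * a, 2 * b, c + d, c - d)) t) = t"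
      by auto
    show "(\<lambda>(x, y, z, w). (x div 2, y div 2, (z + w) div 2, (z - w) div 2)) ` S1 \<subseteq> T1"
    proof
      fix t assume "t \<in> (\<lambda>(x, y, z, w). (x div 2, y div 2, (z + w) div 2, (z - w) div 2)) ` S1"
      then obtain x y z w where s: "t = (x div 2, y div 2, (z + w) div 2, (z - w) div 2)"
        "x^2 + y^2 + 2*z^2 + 2*w^2 = 4 * int m" "even x" "even y" "odd z" "odd w" unfolding S1_def by auto
      obtain a b where ab: "x = 2 * a" "y = 2 * b" using s by (auto elim!: evenE)
      have e1: "even (z + w)" and e2: "even (z - w)" using s by auto
      obtain c where c: "z + w = 2 * c" using e1 by (rule evenE)
      obtain d where d: "z - w = 2 * d" using e2 by (rule evenE)
      have cd: "z + w = 2 * c" "z - w = 2 * d" using c d by auto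
      have zw: "z = c + d" "w = c - d" using cd by linarith+
      have t: "t = (a, b, c, d)" using s(1) ab cd by simp
      have "4 * (a^2 + b^2 + c^2 + d^2) = 4 * int m" using s(2) ab zw by (simp add: power2_eq_square algebra_simps)
      then have "(a, b, c, d) \<in> S4 m" unfolding S4_def by simp
      moreover have "odd (c + d)" using zw s(5) by simp
      ultimately show "t \<in> T1" unfolding T1_def t by simp
    qed
    show "(\<lambda>(a, b, c, d). (2 * a, 2 * b, c + d, c - d)) ` T1 \<subseteq> S1"
    proof
      fix s assume "s \<in> (\<lambda>(a, b, c, d). (2 * a, 2 * b, c + d, c - d)) ` T1"
      then obtain a b c d where t: "s = (2 * a, 2 * b, c + d, c - d)" "a^2 + b^2 + c^2 + d^2 = int m" "odd (c + d)"
        unfolding T1_def S4_def by auto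
      have "(2*a)^2 + (2*b)^2 + 2*(c+d)^2 + 2*(c-d)^2 = 4 * (a^2 + b^2 + c^2 + d^2)"
        by (simp add: power2_eq_square algebra_simps)
      moreover have "odd (c - d)" using t(3) by presburger
      ultimately show "s \<in> S1" unfolding S1_def using t by simp
    qed
  qed
  then have "card S1 = card T1" by (rule bij_betw_same_card)
  then show ?thesis using cT1 unfolding S1_def by simp
qed


lemma sq2_par: "even ((a::int)^2 + b^2) \<longleftrightarrow> even (a + b)"
  using sq_par[of a b 0 0] by (simp add: power2_eq_square)

lemma odd_sq: "odd (z::int) \<Longrightarrow> \<exists>k. z^2 = 8 * k + 1"
proof -
  assume "odd z"
  then obtain j where j: "z = 2 * j + 1" by (rule oddE)
  have "even (j * (j + 1))" by simp
  then obtain t where t: "j * (j + 1) = 2 * t" by (rule evenE)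
  have "z^2 = 4 * (j * (j + 1)) + 1" using j by (simp add: power2_eq_square algebra_simps)
  then have "z^2 = 8 * t + 1" using t by simp
  then show ?thesis by blast
qed

theorem part2:
  fixes m :: nat assumes "odd m"
  shows "card {(x::int, y::int, z::int, w::int).
            x^2 + y^2 + 2*z^2 + 2*w^2 = 8 * int m \<and> even x \<and> even y \<and> odd z \<and> odd w} = 16 * sigma m"
proof -
  define S2 where "S2 = {(x::int, y::int, z::int, w::int).
            x^2 + y^2 + 2*z^2 + 2*w^2 = 8 * int m \<and> even x \<and> even y \<and> odd z \<and> odd w}"
  define f where "f = (\<lambda>(x::int, y::int, z::int, w::int). ((x + y) div 2, (x - y) div 2, z, w))"
  define g where "g = (\<lambda>(a::int, b::int, c::int, d::int). (a + b, a - b, c, d))"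
  have "bij_betw f S2 (O4 m)"
  proof (rule bij_betw_byWitness[where f' = g])
    show "\<forall>s\<in>S2. g (f s) = s"
    proof
      fix s assume "s \<in> S2"
      then obtain x y z w where s: "s = (x, y, z, w)" "even x" "even y" unfolding S2_def by auto
      have "even (x + y)" "even (x - y)" using s by auto
      then have "2 * ((x + y) div 2) = x + y" "2 * ((x - y) div 2) = x - y" by (simp_all add: div2)
      then have "(x + y) div 2 + (x - y) div 2 = x" "(x + y) div 2 - (x - y) div 2 = y" by linarith+
      then show "g (f s) = s" unfolding f_def g_def s by simp
    qed
    show "\<forall>t\<in>O4 m. f (g t) = t"
    proof
      fix t assume "t \<in> O4 m"
      then obtain a b c d where "t = (a, b, c, d)" by (cases t) auto
      moreover have "(a + b + (a - b)) div 2 = a" "(a + b - (a - b)) div 2 = b" by simp_all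
      ultimately show "f (g t) = t" unfolding f_def g_def by simp
    qed
    show "f ` S2 \<subseteq> O4 m"
    proof
      fix t assume "t \<in> f ` S2"
      then obtain x y z w where s: "t = f (x, y, z, w)"
        "x^2 + y^2 + 2*z^2 + 2*w^2 = 8 * int m" "even x" "even y" "odd z" "odd w" unfolding S2_def by auto
      obtain a where a: "x = 2 * a" using s(3) by (rule evenE)
      obtain b where b: "y = 2 * b" using s(4) by (rule evenE)
      obtain k where k: "z^2 = 8 * k + 1" using odd_sq[OF s(5)] by blast
      obtain l where l: "w^2 = 8 * l + 1" using odd_sq[OF s(6)] by blast
      have t: "t = (a + b, a - b, z, w)" using s(1) a b unfolding f_def by simp
      have "4 * (a^2 + b^2) = 8 * int m - 2 * z^2 - 2 * w^2" using s(2) a b by (simp add: power2_eq_square algebra_simps)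
      then have "4 * (a^2 + b^2) = 4 * (2 * (int m - 2 * k - 2 * l) - 1)" using k l by (simp add: algebra_simps)
      then have "a^2 + b^2 = 2 * (int m - 2 * k - 2 * l) - 1" by simp
      then have "odd (a^2 + b^2)" by presburger
      then have oab: "odd (a + b)" using sq2_par by blast
      then have oab': "odd (a - b)" by presburger
      have "(a + b)^2 + (a - b)^2 + z^2 + w^2 = (x^2 + y^2 + 2*z^2 + 2*w^2) div 2"
        using a b by (simp add: power2_eq_square algebra_simps)
      also have "\<dots> = 4 * int m" using s(2) by simp
      finally show "t \<in> O4 m" unfolding t O4_def using oab oab' s(5,6) by simp
    qed
    show "g ` O4 m \<subseteq> S2"
    proof
      fix s assume "s \<in> g ` O4 m"
      then obtain a b c d where t: "s = (a + b, a - b, c, d)" "odd a" "odd b" "odd c" "odd d"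
        "a^2 + b^2 + c^2 + d^2 = 4 * int m" unfolding O4_def g_def by auto
      have "(a + b)^2 + (a - b)^2 + 2*c^2 + 2*d^2 = 2 * (a^2 + b^2 + c^2 + d^2)"
        by (simp add: power2_eq_square algebra_simps)
      then show "s \<in> S2" unfolding S2_def using t by simp
    qed
  qed
  then have "card S2 = card (O4 m)" by (rule bij_betw_same_card)
  then show ?thesis using counts(2)[OF assms] unfolding S2_def by simp
qed

theorem part3:
  fixes m :: nat assumes "odd m"
  shows "card {(x::int, y::int, z::int, w::int).
            x^2 + y^2 + 2*z^2 + 2*w^2 = 4 * int m \<and> odd x \<and> odd y \<and> (odd z \<longleftrightarrow> even w)} = 16 * sigma m"
proof -
  define S3 where "S3 = {(x::int, y::int, z::int, w::int).
            x^2 + y^2 + 2*z^2 + 2*w^2 = 4 * int m \<and> odd x \<and> odd y \<and> (odd z \<longleftrightarrow> even w)}"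
  define f where "f = (\<lambda>(x::int, y::int, z::int, w::int). (x, y, z + w, z - w))"
  define g where "g = (\<lambda>(a::int, b::int, c::int, d::int). (a, b, (c + d) div 2, (c - d) div 2))"
  have "bij_betw f S3 (O4 m)"
  proof (rule bij_betw_byWitness[where f' = g])
    show "\<forall>s\<in>S3. g (f s) = s"
    proof
      fix s assume "s \<in> S3"
      then obtain x y z w where "s = (x, y, z, w)" by (cases s) auto
      moreover have "(z + w + (z - w)) div 2 = z" "(z + w - (z - w)) div 2 = w" by simp_all
      ultimately show "g (f s) = s" unfolding f_def g_def by simp
    qed
    show "\<forall>t\<in>O4 m. f (g t) = t"
    proof
      fix t assume "t \<in> O4 m"
      then obtain a b c d where t: "t = (a, b, c, d)" "odd c" "odd d" unfolding O4_def by auto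
      have "even (c + d)" "even (c - d)" using t by auto
      then have "2 * ((c + d) div 2) = c + d" "2 * ((c - d) div 2) = c - d" by (simp_all add: div2)
      then have "(c + d) div 2 + (c - d) div 2 = c" "(c + d) div 2 - (c - d) div 2 = d" by linarith+
      then show "f (g t) = t" unfolding f_def g_def t by simp
    qed
    show "f ` S3 \<subseteq> O4 m"
    proof
      fix t assume "t \<in> f ` S3"
      then obtain x y z w where s: "t = (x, y, z + w, z - w)"
        "x^2 + y^2 + 2*z^2 + 2*w^2 = 4 * int m" "odd x" "odd y" "odd z \<longleftrightarrow> even w" unfolding S3_def f_def by auto
      have o: "odd (z + w)" "odd (z - w)" using s(5) by auto
      have "x^2 + y^2 + (z + w)^2 + (z - w)^2 = x^2 + y^2 + 2*z^2 + 2*w^2"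
        by (simp add: power2_eq_square algebra_simps)
      then show "t \<in> O4 m" unfolding O4_def s(1) using s o by simp
    qed
    show "g ` O4 m \<subseteq> S3"
    proof
      fix s assume "s \<in> g ` O4 m"
      then obtain a b c d where t: "s = (a, b, (c + d) div 2, (c - d) div 2)" "odd a" "odd b" "odd c" "odd d"
        "a^2 + b^2 + c^2 + d^2 = 4 * int m" unfolding O4_def g_def by auto
      have "even (c + d)" "even (c - d)" using t by auto
      then have e: "2 * ((c + d) div 2) = c + d" "2 * ((c - d) div 2) = c - d" by (simp_all add: div2)
      define z where "z = (c + d) div 2"
      define w where "w = (c - d) div 2"
      have zw: "z + w = c" "z - w = d" using e unfolding z_def w_def by linarith+
      have "2*z^2 + 2*w^2 = (z + w)^2 + (z - w)^2" by (simp add: power2_eq_square algebra_simps)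
      then have "a^2 + b^2 + 2*z^2 + 2*w^2 = 4 * int m" using zw t(6) by simp
      moreover have "odd z \<longleftrightarrow> even w" using zw t(4) by presburger
      ultimately show "s \<in> S3" unfolding S3_def t(1) z_def[symmetric] w_def[symmetric] using t by simp
    qed
  qed
  then have "card S3 = card (O4 m)" by (rule bij_betw_same_card)
  then show ?thesis using counts(2)[OF assms] unfolding S3_def by simp
qed

theorem theorem58:
  fixes m :: nat
  assumes "odd m" and "m > 0"
  shows "(card {(x::int, y::int, z::int, w::int).
            x^2 + y^2 + 2*z^2 + 2*w^2 = 4 * int m \<and> even x \<and> even y \<and> odd z \<and> odd w}
           = 4 * sigma m) \<and>
          (card {(x::int, y::int, z::int, w::int).
            x^2 + y^2 + 2*z^2 + 2*w^2 = 8 * int m \<and> even x \<and> even y \<and> odd z \<and> odd w}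
           = 16 * sigma m) \<and>
          (card {(x::int, y::int, z::int, w::int).
            x^2 + y^2 + 2*z^2 + 2*w^2 = 4 * int m \<and> odd x \<and> odd y \<and> (odd z \<longleftrightarrow> even w)}
           = 16 * sigma m)"
  using part1[OF assms(1)] part2[OF assms(1)] part3[OF assms(1)] by blast


end
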